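(* Let $\widehat M$ be a cooperative Markov game with MMDP $M$ and $(S_{target},S_{avoid})$ a reach-avoid objective, and let $v^*=\sup_{\pi_{act}}\mathbb P_{M_{\pi_{act}}}((\neg S_{avoid})\mathcal U S_{target})$. Let $(x^*_{s,a},x^*_{o,c})$ be an optimal solution of the optimization problem (OPT) below, and define $\pi^*_{comm}(o)(c)=x^*_{o,c}/\sum_{d\in\mathcal A_{comm}}x^*_{o,d}$ and $\pi^*_{act}(s)(a)=x^*_{s,a}/\sum_{b\in\mathcal A}x^*_{s,b}$ (arbitrary distributions where the denominator is $0$). Then $\mathbb P_{M_{\pi^*_{act}}}((\neg S_{avoid})\mathcal U S_{target})=v^*$, and for every pair $(\pi'_{comm},\pi'_{act})\in\Pi^{pos}_{comm}(\mathcal O,K)\times\Pi^{pos}_{act}(M)$ with $\mathbb P_{M_{\pi'_{act}}}((\neg S_{avoid})\mathcal U S_{target})=v^*$ (and finite occupancy measures) we have $\bar D_{(\pi^*_{comm},\pi^*_{act})}\le\bar D_{(\pi'_{comm},\pi'_{act})}$. (OPT): variables $x_{s,a}\ge0$ for $s\in\mathcal S\setminus\mathcal T$, $a\in\mathcal A$, and $x_{o,c}\ge0$ for $o\in\mathcal O$, $c\in\mathcal A_{comm}$; minimize $\bar d=\Phi(x)$ subject to (i) flow: $\sum_{a}x_{s,a}=\sum_{s'\notin\mathcal T,\,b\in\mathcal A}x_{s',b}P(s',b)(s)+\mathbb 1[s=s_{init}]$ for all $s\in\mathcal S\setminus\mathcal T$; (ii) reach-avoid: $v^*\le\sum_{s\notin\mathcal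 T,\,a\in\mathcal A,\,s'\in S_{target}}x_{s,a}P(s,a)(s')$; (iii) consistency: $\sum_{l\in\mathcal L:(o,l)\notin\mathcal T,\,a\in\mathcal A}x_{(o,l),a}=\sum_{c\in\mathcal A_{comm}}x_{o,c}$ for all $o\in\mathcal O$.
   Context: MMDP: there are $N\ge1$ agents, identified with $[N]=\{1,\dots,N\}$. Agent $i$ has a finite local state set $\mathcal S^i$, finite local action set $\mathcal A^i$, local transition function $P^i:\mathcal S^i\times\mathcal A^i\to\Delta(\mathcal S^i)$ and initial local state $s^i_{init}$. Joint states $\mathcal S=\prod_i\mathcal S^i$, joint actions $\mathcal A=\prod_i\mathcal A^i$, joint transitions $P(s,a)(u)=\prod_{i}P^i(s^i,a^i)(u^i)$, initial state $s_{init}$. Positional joint action policies $\pi_{act}:\mathcal S\to\Delta(\mathcal A)$ form $\Pi^{pos}_{act}(M)$. Cooperative Markov game $\widehat M=(M,\mathcal O^1,\dots,\mathcal O^N,\mathcal L^1,\dots,\mathcal L^N,K)$: each $\mathcal S^i=\mathcal O^i\times\mathcal L^i$; $\mathcal O=\prod_i\mathcal O^i$, $\mathcal L=\prod_i\mathcal L^i$, joint state $s=(o,l)$. For $c\subseteq[N]$, $\mathcal L^c,\mathcal A^c$ are the products over $j\in c$, $o^c,l^c,a^c$ restrictions, $P^c((o^c,l^c),a^c)((o^c_1,l^c_1))=\prod_{j\in c}P^j((o^j,l^j),a^j)((o^j_1,l^j_1))$. $K\in\{0,\dots,N\}$; $\mathcal A_{comm}$ is the set of subsets of $[N]$ of size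 $K$. Positional communication policies $\pi_{comm}:\mathcal O\to\Delta(\mathcal A_{comm})$ form $\Pi^{pos}_{comm}(\mathcal O,K)$. Reach-avoid objective: disjoint $S_{target},S_{avoid}\subseteq\mathcal S$, $\mathcal T=S_{target}\cup S_{avoid}$; the process $S_0=s_{init},A_1,S_1,\dots$ of $M$ under $\pi_{act}$ (with $\mathbb P(A_t=a,S_t=s'\mid\dots,S_{t-1}=s)=\pi_{act}(s)(a)P(s,a)(s')$) is stopped upon entering $\mathcal T$; $\mathbb P_{M_{\pi_{act}}}((\neg S_{avoid})\mathcal U S_{target})$ is the probability of reaching $S_{target}$ without previously visiting $S_{avoid}$. Occupancy measures: $\nu_{s,a}=\sum_{t\ge1}\mathbb P(S_{t-1}=s,A_t=a,\ S_0,\dots,S_{t-1}\notin\mathcal T)$ for $s\notin\mathcal T$. The function $\Phi$: for nonnegative numbers $y_{s,a}$ ($s\notin\mathcal T$) and weights $W'(o,i)$, $W''(o,c)$, with marginals $y_{o,l^c,a^c}=\sum y_{(o,l),a}$ over $l$ with restriction $l^c$, $(o,l)\notin\mathcal T$, and $a$ with restriction $a^c$ ($y_{o,l^i,a^i}$ for $c=\{i\}$), put $h=-\sum_{s\notin\mathcal T,a}y_{s,a}\log\frac{y_{s,a}}{\sum_by_{s,b}}-\sum_{s\notin\mathcal T,a,s'}y_{s,a}P(s,a)(s')\log P(s,a)(s')$, $g^i=-\sum_{o,l^i,a^i}y_{o,l^i,a^i}W'(o,i)\log\frac{y_{o,l^i,a^i}}{\sum_{b^i}y_{o,l^i,b^i}}-\sum_{o,l^i,a^i,o^i_1,l^i_1}y_{o,l^i,a^i}W'(o,i)P^i((o^i,l^i),a^i)((o^i_1,l^i_1))\log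 P^i((o^i,l^i),a^i)((o^i_1,l^i_1))$, $g^c$ analogously with $c$ in place of $i$, $W''(o,c)$ and $P^c$; and value $-h+\sum_{i\in[N]}g^i+\sum_{c\in\mathcal A_{comm}}g^c$. In (OPT), $\Phi(x)$ is this value with $y=x$, $W'(o,i)=\sum_{c\in\mathcal A_{comm},i\notin c}x_{o,c}/\sum_{c'}x_{o,c'}$ and $W''(o,c)=x_{o,c}/\sum_{c'}x_{o,c'}$. For a policy pair, $\bar D_{(\pi_{comm},\pi_{act})}$ is this value with $y=\nu$ (occupancy measures of $\pi_{act}$), $W'(o,i)=\sum_{c\in\mathcal A_{comm},i\notin c}\pi_{comm}(o)(c)$ and $W''(o,c)=\pi_{comm}(o)(c)$. Conventions: $0\log0=0$; summands with zero occupancy are $0$. *)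

theory Defs
  imports Complex_Main "HOL-Library.FuncSet"
begin

text \<open>Agent i has local observable states Obs i, local private
states Loc i, local actions Act i, and local transition function Ptr i
(a real-valued stochastic kernel on Obs i x Loc i). Kc is the communication budget K.\<close>

record ('o, 'l, 'a) game =
  nag   :: nat
  Obs   :: "nat \<Rightarrow> 'o set"
  Loc   :: "nat \<Rightarrow> 'l set"
  Act   :: "nat \<Rightarrow> 'a set"
  Ptr   :: "nat \<Rightarrow> 'o \<times> 'l \<Rightarrow> 'a \<Rightarrow> 'o \<times> 'l \<Rightarrow> real"
  sinit :: "(nat \<Rightarrow> 'o) \<times> (nat \<Rightarrow> 'l)"
  Kc    :: nat

definition agents :: "('o,'l,'a) game \<Rightarrow> nat set" where
  "agents G = {1..nag G}"

definition jO :: "('o,'l,'a) game \<Rightarrow> (nat \<Rightarrow> 'o) set" where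
  "jO G = PiE (agents G) (Obs G)"

definition jL :: "('o,'l,'a) game \<Rightarrow> (nat \<Rightarrow> 'l) set" where
  "jL G = PiE (agents G) (Loc G)"

definition jS :: "('o,'l,'a) game \<Rightarrow> ((nat \<Rightarrow> 'o) \<times> (nat \<Rightarrow> 'l)) set" where
  "jS G = jO G \<times> jL G"

definition jA :: "('o,'l,'a) game \<Rightarrow> (nat \<Rightarrow> 'a) set" where
  "jA G = PiE (agents G) (Act G)"

definition jP :: "('o,'l,'a) game \<Rightarrow> (nat \<Rightarrow> 'o) \<times> (nat \<Rightarrow> 'l) \<Rightarrow> (nat \<Rightarrow> 'a)
    \<Rightarrow> (nat \<Rightarrow> 'o) \<times> (nat \<Rightarrow> 'l) \<Rightarrow> real" where
  "jP G s a s' = (\<Prod>i\<in>agents G. Ptr G i (fst s i, snd s i) (a i) (fst s' i, snd s' i))"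

definition Acomm :: "('o,'l,'a) game \<Rightarrow> nat set set" where
  "Acomm G = {c. c \<subseteq> agents G \<and> card c = Kc G}"

definition well_formed_game :: "('o,'l,'a) game \<Rightarrow> bool" where
  "well_formed_game G \<longleftrightarrow> nag G \<ge> 1 \<and> Kc G \<le> nag G \<and>
     (\<forall>i\<in>agents G. finite (Obs G i) \<and> Obs G i \<noteq> {} \<and> finite (Loc G i) \<and> Loc G i \<noteq> {}
        \<and> finite (Act G i) \<and> Act G i \<noteq> {}
        \<and> (\<forall>s\<in>Obs G i \<times> Loc G i. \<forall>a\<in>Act G i.
              (\<forall>s'\<in>Obs G i \<times> Loc G i. 0 \<le> Ptr G i s a s') \<and>
              (\<Sum>s'\<in>Obs G i \<times> Loc G i. Ptr G i s a s') = 1)) \<and>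
     sinit G \<in> jS G"

definition reach_avoid_obj :: "('o,'l,'a) game \<Rightarrow> ((nat \<Rightarrow> 'o) \<times> (nat \<Rightarrow> 'l)) set
    \<Rightarrow> ((nat \<Rightarrow> 'o) \<times> (nat \<Rightarrow> 'l)) set \<Rightarrow> bool" where
  "reach_avoid_obj G Tg Av \<longleftrightarrow> Tg \<subseteq> jS G \<and> Av \<subseteq> jS G \<and> Tg \<inter> Av = {}"

definition act_policy :: "('o,'l,'a) game \<Rightarrow>
    ((nat \<Rightarrow> 'o) \<times> (nat \<Rightarrow> 'l) \<Rightarrow> (nat \<Rightarrow> 'a) \<Rightarrow> real) \<Rightarrow> bool" where
  "act_policy G \<pi> \<longleftrightarrow> (\<forall>s\<in>jS G. (\<forall>a\<in>jA G. 0 \<le> \<pi> s a) \<and> (\<Sum>a\<in>jA G. \<pi> s a) = 1)"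

definition comm_policy :: "('o,'l,'a) game \<Rightarrow> ((nat \<Rightarrow> 'o) \<Rightarrow> nat set \<Rightarrow> real) \<Rightarrow> bool" where
  "comm_policy G \<pi> \<longleftrightarrow> (\<forall>ob\<in>jO G. (\<forall>c\<in>Acomm G. 0 \<le> \<pi> ob c) \<and> (\<Sum>c\<in>Acomm G. \<pi> ob c) = 1)"

text \<open>reach_n n s = probability, starting in s, of reaching Tg within n steps
without previously visiting Av (process stopped upon entering Tg \<union> Av).\<close>
primrec reach_n :: "('o,'l,'a) game \<Rightarrow> ((nat \<Rightarrow> 'o) \<times> (nat \<Rightarrow> 'l)) set
    \<Rightarrow> ((nat \<Rightarrow> 'o) \<times> (nat \<Rightarrow> 'l)) set
    \<Rightarrow> ((nat \<Rightarrow> 'o) \<times> (nat \<Rightarrow> 'l) \<Rightarrow> (nat \<Rightarrow> 'a) \<Rightarrow> real)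
    \<Rightarrow> nat \<Rightarrow> (nat \<Rightarrow> 'o) \<times> (nat \<Rightarrow> 'l) \<Rightarrow> real" where
  "reach_n G Tg Av \<pi> 0 s = (if s \<in> Tg then 1 else 0)"
| "reach_n G Tg Av \<pi> (Suc n) s =
     (if s \<in> Tg then 1 else if s \<in> Av then 0 else
        (\<Sum>a\<in>jA G. \<pi> s a * (\<Sum>s'\<in>jS G. jP G s a s' * reach_n G Tg Av \<pi> n s')))"

text \<open>P((\<not> Av) U Tg) from the initial state: the (monotone) limit of the bounded-horizon probabilities.\<close>
definition reach_prob :: "('o,'l,'a) game \<Rightarrow> ((nat \<Rightarrow> 'o) \<times> (nat \<Rightarrow> 'l)) set
    \<Rightarrow> ((nat \<Rightarrow> 'o) \<times> (nat \<Rightarrow> 'l)) set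
    \<Rightarrow> ((nat \<Rightarrow> 'o) \<times> (nat \<Rightarrow> 'l) \<Rightarrow> (nat \<Rightarrow> 'a) \<Rightarrow> real) \<Rightarrow> real" where
  "reach_prob G Tg Av \<pi> = lim (\<lambda>n. reach_n G Tg Av \<pi> n (sinit G))"

definition vstar :: "('o,'l,'a) game \<Rightarrow> ((nat \<Rightarrow> 'o) \<times> (nat \<Rightarrow> 'l)) set
    \<Rightarrow> ((nat \<Rightarrow> 'o) \<times> (nat \<Rightarrow> 'l)) set \<Rightarrow> real" where
  "vstar G Tg Av = (SUP \<pi>\<in>{\<pi>. act_policy G \<pi>}. reach_prob G Tg Av \<pi>)"

text \<open>stdist t s = P(S_t = s, S_0,...,S_t \<notin> T).\<close>
primrec stdist :: "('o,'l,'a) game \<Rightarrow> ((nat \<Rightarrow> 'o) \<times> (nat \<Rightarrow> 'l)) set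
    \<Rightarrow> ((nat \<Rightarrow> 'o) \<times> (nat \<Rightarrow> 'l) \<Rightarrow> (nat \<Rightarrow> 'a) \<Rightarrow> real)
    \<Rightarrow> nat \<Rightarrow> (nat \<Rightarrow> 'o) \<times> (nat \<Rightarrow> 'l) \<Rightarrow> real" where
  "stdist G T \<pi> 0 s = (if s = sinit G \<and> s \<notin> T then 1 else 0)"
| "stdist G T \<pi> (Suc t) s' =
     (if s' \<notin> T then (\<Sum>s\<in>jS G - T. stdist G T \<pi> t s * (\<Sum>a\<in>jA G. \<pi> s a * jP G s a s')) else 0)"

text \<open>nu_{s,a} = sum_{t>=1} P(S_{t-1}=s, A_t=a, S_0..S_{t-1} \<notin> T).\<close>
definition occ :: "('o,'l,'a) game \<Rightarrow> ((nat \<Rightarrow> 'o) \<times> (nat \<Rightarrow> 'l)) set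
    \<Rightarrow> ((nat \<Rightarrow> 'o) \<times> (nat \<Rightarrow> 'l) \<Rightarrow> (nat \<Rightarrow> 'a) \<Rightarrow> real)
    \<Rightarrow> (nat \<Rightarrow> 'o) \<times> (nat \<Rightarrow> 'l) \<Rightarrow> (nat \<Rightarrow> 'a) \<Rightarrow> real" where
  "occ G T \<pi> s a = (\<Sum>t. stdist G T \<pi> t s * \<pi> s a)"

definition finite_occ :: "('o,'l,'a) game \<Rightarrow> ((nat \<Rightarrow> 'o) \<times> (nat \<Rightarrow> 'l)) set
    \<Rightarrow> ((nat \<Rightarrow> 'o) \<times> (nat \<Rightarrow> 'l) \<Rightarrow> (nat \<Rightarrow> 'a) \<Rightarrow> real) \<Rightarrow> bool" where
  "finite_occ G T \<pi> \<longleftrightarrow> (\<forall>s\<in>jS G - T. \<forall>a\<in>jA G. summable (\<lambda>t. stdist G T \<pi> t s * \<pi> s a))"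

definition hterm :: "('o,'l,'a) game \<Rightarrow> ((nat \<Rightarrow> 'o) \<times> (nat \<Rightarrow> 'l)) set
    \<Rightarrow> ((nat \<Rightarrow> 'o) \<times> (nat \<Rightarrow> 'l) \<Rightarrow> (nat \<Rightarrow> 'a) \<Rightarrow> real) \<Rightarrow> real" where
  "hterm G T y =
     - (\<Sum>s\<in>jS G - T. \<Sum>a\<in>jA G. y s a * ln (y s a / (\<Sum>b\<in>jA G. y s b)))
     - (\<Sum>s\<in>jS G - T. \<Sum>a\<in>jA G. \<Sum>s'\<in>jS G. y s a * jP G s a s' * ln (jP G s a s'))"

definition ymarg :: "('o,'l,'a) game \<Rightarrow> ((nat \<Rightarrow> 'o) \<times> (nat \<Rightarrow> 'l)) set
    \<Rightarrow> ((nat \<Rightarrow> 'o) \<times> (nat \<Rightarrow> 'l) \<Rightarrow> (nat \<Rightarrow> 'a) \<Rightarrow> real)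
    \<Rightarrow> (nat \<Rightarrow> 'o) \<Rightarrow> nat set \<Rightarrow> (nat \<Rightarrow> 'l) \<Rightarrow> (nat \<Rightarrow> 'a) \<Rightarrow> real" where
  "ymarg G T y ob c lc ac =
     (\<Sum>l\<in>{l\<in>jL G. restrict l c = lc \<and> (ob, l) \<notin> T}.
        \<Sum>a\<in>{a\<in>jA G. restrict a c = ac}. y (ob, l) a)"

definition Pc :: "('o,'l,'a) game \<Rightarrow> nat set \<Rightarrow> (nat \<Rightarrow> 'o) \<Rightarrow> (nat \<Rightarrow> 'l) \<Rightarrow> (nat \<Rightarrow> 'a)
    \<Rightarrow> (nat \<Rightarrow> 'o) \<Rightarrow> (nat \<Rightarrow> 'l) \<Rightarrow> real" where
  "Pc G c ob lc ac o1 l1 = (\<Prod>j\<in>c. Ptr G j (ob j, lc j) (ac j) (o1 j, l1 j))"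

definition gterm :: "('o,'l,'a) game \<Rightarrow> ((nat \<Rightarrow> 'o) \<times> (nat \<Rightarrow> 'l)) set
    \<Rightarrow> ((nat \<Rightarrow> 'o) \<times> (nat \<Rightarrow> 'l) \<Rightarrow> (nat \<Rightarrow> 'a) \<Rightarrow> real)
    \<Rightarrow> ((nat \<Rightarrow> 'o) \<Rightarrow> real) \<Rightarrow> nat set \<Rightarrow> real" where
  "gterm G T y W c =
     - (\<Sum>ob\<in>jO G. \<Sum>lc\<in>PiE c (Loc G). \<Sum>ac\<in>PiE c (Act G).
          ymarg G T y ob c lc ac * W ob *
          ln (ymarg G T y ob c lc ac / (\<Sum>bc\<in>PiE c (Act G). ymarg G T y ob c lc bc)))
     - (\<Sum>ob\<in>jO G. \<Sum>lc\<in>PiE c (Loc G). \<Sum>ac\<in>PiE c (Act G).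
          \<Sum>(o1, l1)\<in>PiE c (Obs G) \<times> PiE c (Loc G).
          ymarg G T y ob c lc ac * W ob * Pc G c ob lc ac o1 l1 * ln (Pc G c ob lc ac o1 l1))"

definition PhiV :: "('o,'l,'a) game \<Rightarrow> ((nat \<Rightarrow> 'o) \<times> (nat \<Rightarrow> 'l)) set
    \<Rightarrow> ((nat \<Rightarrow> 'o) \<times> (nat \<Rightarrow> 'l) \<Rightarrow> (nat \<Rightarrow> 'a) \<Rightarrow> real)
    \<Rightarrow> ((nat \<Rightarrow> 'o) \<Rightarrow> nat \<Rightarrow> real) \<Rightarrow> ((nat \<Rightarrow> 'o) \<Rightarrow> nat set \<Rightarrow> real) \<Rightarrow> real" where
  "PhiV G T y W1 W2 =
     - hterm G T y
     + (\<Sum>i\<in>agents G. gterm G T y (\<lambda>ob. W1 ob i) {i})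
     + (\<Sum>c\<in>Acomm G. gterm G T y (\<lambda>ob. W2 ob c) c)"

definition opt_feasible :: "('o,'l,'a) game \<Rightarrow> ((nat \<Rightarrow> 'o) \<times> (nat \<Rightarrow> 'l)) set
    \<Rightarrow> ((nat \<Rightarrow> 'o) \<times> (nat \<Rightarrow> 'l)) set
    \<Rightarrow> ((nat \<Rightarrow> 'o) \<times> (nat \<Rightarrow> 'l) \<Rightarrow> (nat \<Rightarrow> 'a) \<Rightarrow> real)
    \<Rightarrow> ((nat \<Rightarrow> 'o) \<Rightarrow> nat set \<Rightarrow> real) \<Rightarrow> bool" where
  "opt_feasible G Tg Av xs xo \<longleftrightarrow>
     (let T = Tg \<union> Av in
       (\<forall>s\<in>jS G - T. \<forall>a\<in>jA G. 0 \<le> xs s a) \<and>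
       (\<forall>ob\<in>jO G. \<forall>c\<in>Acomm G. 0 \<le> xo ob c) \<and>
       (\<forall>s\<in>jS G - T. (\<Sum>a\<in>jA G. xs s a) =
           (\<Sum>s'\<in>jS G - T. \<Sum>b\<in>jA G. xs s' b * jP G s' b s) + (if s = sinit G then 1 else 0)) \<and>
       vstar G Tg Av \<le> (\<Sum>s\<in>jS G - T. \<Sum>a\<in>jA G. \<Sum>s'\<in>Tg. xs s a * jP G s a s') \<and>
       (\<forall>ob\<in>jO G. (\<Sum>l\<in>{l\<in>jL G. (ob, l) \<notin> T}. \<Sum>a\<in>jA G. xs (ob, l) a) = (\<Sum>c\<in>Acomm G. xo ob c)))"

definition opt_objective :: "('o,'l,'a) game \<Rightarrow> ((nat \<Rightarrow> 'o) \<times> (nat \<Rightarrow> 'l)) set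
    \<Rightarrow> ((nat \<Rightarrow> 'o) \<times> (nat \<Rightarrow> 'l) \<Rightarrow> (nat \<Rightarrow> 'a) \<Rightarrow> real)
    \<Rightarrow> ((nat \<Rightarrow> 'o) \<Rightarrow> nat set \<Rightarrow> real) \<Rightarrow> real" where
  "opt_objective G T xs xo =
     PhiV G T xs
       (\<lambda>ob i. (\<Sum>c\<in>{c\<in>Acomm G. i \<notin> c}. xo ob c) / (\<Sum>c'\<in>Acomm G. xo ob c'))
       (\<lambda>ob c. xo ob c / (\<Sum>c'\<in>Acomm G. xo ob c'))"

definition opt_optimal :: "('o,'l,'a) game \<Rightarrow> ((nat \<Rightarrow> 'o) \<times> (nat \<Rightarrow> 'l)) set
    \<Rightarrow> ((nat \<Rightarrow> 'o) \<times> (nat \<Rightarrow> 'l)) set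
    \<Rightarrow> ((nat \<Rightarrow> 'o) \<times> (nat \<Rightarrow> 'l) \<Rightarrow> (nat \<Rightarrow> 'a) \<Rightarrow> real)
    \<Rightarrow> ((nat \<Rightarrow> 'o) \<Rightarrow> nat set \<Rightarrow> real) \<Rightarrow> bool" where
  "opt_optimal G Tg Av xs xo \<longleftrightarrow> opt_feasible G Tg Av xs xo \<and>
     (\<forall>xs' xo'. opt_feasible G Tg Av xs' xo' \<longrightarrow>
        opt_objective G (Tg \<union> Av) xs xo \<le> opt_objective G (Tg \<union> Av) xs' xo')"

definition Dbar :: "('o,'l,'a) game \<Rightarrow> ((nat \<Rightarrow> 'o) \<times> (nat \<Rightarrow> 'l)) set
    \<Rightarrow> ((nat \<Rightarrow> 'o) \<Rightarrow> nat set \<Rightarrow> real)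
    \<Rightarrow> ((nat \<Rightarrow> 'o) \<times> (nat \<Rightarrow> 'l) \<Rightarrow> (nat \<Rightarrow> 'a) \<Rightarrow> real) \<Rightarrow> real" where
  "Dbar G T pc pa =
     PhiV G T (occ G T pa) (\<lambda>ob i. \<Sum>c\<in>{c\<in>Acomm G. i \<notin> c}. pc ob c) (\<lambda>ob c. pc ob c)"

end

theory Submission
  imports Defs
begin


lemma bij_pair_PiE:
  "bij_betw (\<lambda>(ob,l). restrict (\<lambda>i. (ob i, l i)) A) (PiE A Ob \<times> PiE A Lc) (PiE A (\<lambda>i. Ob i \<times> Lc i))"
proof (rule bij_betw_byWitness[where f'="\<lambda>g. (restrict (fst \<circ> g) A, restrict (snd \<circ> g) A)"])
  show "\<forall>a\<in>PiE A Ob \<times> PiE A Lc. (\<lambda>g. (restrict (fst \<circ> g) A, restrict (snd \<circ> g) A)) ((\<lambda>(ob,l). restrict (\<lambda>i. (ob i, l i)) A) a) = a"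
    by (auto simp: PiE_def extensional_def fun_eq_iff)
  show "\<forall>a'\<in>PiE A (\<lambda>i. Ob i \<times> Lc i). (\<lambda>(ob,l). restrict (\<lambda>i. (ob i, l i)) A) ((\<lambda>g. (restrict (fst \<circ> g) A, restrict (snd \<circ> g) A)) a') = a'"
    by (auto simp: PiE_def extensional_def fun_eq_iff)
  show "(\<lambda>(ob,l). restrict (\<lambda>i. (ob i, l i)) A) ` (PiE A Ob \<times> PiE A Lc) \<subseteq> PiE A (\<lambda>i. Ob i \<times> Lc i)"
    by auto
  show "(\<lambda>g. (restrict (fst \<circ> g) A, restrict (snd \<circ> g) A)) ` PiE A (\<lambda>i. Ob i \<times> Lc i) \<subseteq> PiE A Ob \<times> PiE A Lc"
    by (auto simp: PiE_def Pi_def)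
qed

lemma wf_finite:
  assumes "well_formed_game G"
  shows "finite (jS G)" "finite (jA G)" "finite (jO G)" "finite (jL G)" "finite (Acomm G)"
    "finite (agents G)" "sinit G \<in> jS G"
proof -
  have fa: "finite (agents G)" by (simp add: agents_def)
  have o: "finite (jO G)" using assms fa unfolding well_formed_game_def jO_def by (intro finite_PiE) auto
  have l: "finite (jL G)" using assms fa unfolding well_formed_game_def jL_def by (intro finite_PiE) auto
  have a: "finite (jA G)" using assms fa unfolding well_formed_game_def jA_def by (intro finite_PiE) auto
  have c: "finite (Acomm G)" unfolding Acomm_def using fa
    by (rule finite_subset[rotated, OF finite_Pow_iff[THEN iffD2]]) auto
  show "finite (jS G)" "finite (jA G)" "finite (jO G)" "finite (jL G)" "finite (Acomm G)"
    "finite (agents G)" "sinit G \<in> jS G" using o l a c fa assms by (auto simp: jS_def well_formed_game_def)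
qed

lemma jP_nonneg:
  assumes "well_formed_game G" "s \<in> jS G" "a \<in> jA G" "s' \<in> jS G"
  shows "0 \<le> jP G s a s'"
  unfolding jP_def
proof (rule prod_nonneg)
  fix i assume i: "i \<in> agents G"
  have "(fst s i, snd s i) \<in> Obs G i \<times> Loc G i" "(fst s' i, snd s' i) \<in> Obs G i \<times> Loc G i" "a i \<in> Act G i"
    using assms(2-4) i by (auto simp: jS_def jO_def jL_def jA_def PiE_def Pi_def mem_Times_iff)
  then show "0 \<le> Ptr G i (fst s i, snd s i) (a i) (fst s' i, snd s' i)"
    using assms(1) i unfolding well_formed_game_def by blast
qed

lemma jP_sum:
  assumes "well_formed_game G" "s \<in> jS G" "a \<in> jA G"
  shows "(\<Sum>s'\<in>jS G. jP G s a s') = 1"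
proof -
  let ?A = "agents G"
  have fa: "finite ?A" by (simp add: agents_def)
  have "(\<Sum>s'\<in>jS G. jP G s a s') =
      (\<Sum>g\<in>PiE ?A (\<lambda>i. Obs G i \<times> Loc G i). \<Prod>i\<in>?A. Ptr G i (fst s i, snd s i) (a i) (g i))"
    unfolding sum.reindex_bij_betw[OF bij_pair_PiE, symmetric]
    unfolding jS_def jO_def jL_def jP_def
    by (intro sum.cong refl prod.cong) auto
  also have "\<dots> = (\<Prod>i\<in>?A. \<Sum>y\<in>Obs G i \<times> Loc G i. Ptr G i (fst s i, snd s i) (a i) y)"
    using assms(1) fa by (subst prod_sum_PiE) (auto simp: well_formed_game_def)
  also have "\<dots> = (\<Prod>i\<in>?A. 1)"
  proof (rule prod.cong[OF refl])
    fix i assume i: "i \<in> ?A"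
    have "(fst s i, snd s i) \<in> Obs G i \<times> Loc G i" "a i \<in> Act G i"
      using assms(2-3) i by (auto simp: jS_def jO_def jL_def jA_def PiE_def Pi_def mem_Times_iff)
    then show "(\<Sum>y\<in>Obs G i \<times> Loc G i. Ptr G i (fst s i, snd s i) (a i) y) = 1"
      using assms(1) i unfolding well_formed_game_def by blast
  qed
  finally show ?thesis by simp
qed




lemma swap3:
  fixes d :: "'s \<Rightarrow> real" and r :: "'t \<Rightarrow> real"
  shows "(\<Sum>s\<in>S. d s * (\<Sum>a\<in>B. p s a * (\<Sum>s'\<in>C. q s a s' * r s'))) =
         (\<Sum>s'\<in>C. (\<Sum>s\<in>S. d s * (\<Sum>a\<in>B. p s a * q s a s')) * r s')"
proof -
  have "(\<Sum>s\<in>S. d s * (\<Sum>a\<in>B. p s a * (\<Sum>s'\<in>C. q s a s' * r s'))) =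
        (\<Sum>s\<in>S. \<Sum>a\<in>B. \<Sum>s'\<in>C. d s * p s a * q s a s' * r s')"
    by (simp add: sum_distrib_left mult.assoc)
  also have "\<dots> = (\<Sum>s\<in>S. \<Sum>s'\<in>C. \<Sum>a\<in>B. d s * p s a * q s a s' * r s')"
    by (rule sum.cong[OF refl], rule sum.swap)
  also have "\<dots> = (\<Sum>s'\<in>C. \<Sum>s\<in>S. \<Sum>a\<in>B. d s * p s a * q s a s' * r s')"
    by (rule sum.swap)
  also have "\<dots> = (\<Sum>s'\<in>C. (\<Sum>s\<in>S. d s * (\<Sum>a\<in>B. p s a * q s a s')) * r s')"
    by (simp add: sum_distrib_left sum_distrib_right mult_ac)
  finally show ?thesis .
qed

lemma stdist_nonneg:
  assumes wf: "well_formed_game G" and pol: "act_policy G \<pi>" and s: "s \<in> jS G"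
  shows "0 \<le> stdist G T \<pi> t s"
  using s
proof (induction t arbitrary: s)
  case 0 then show ?case by simp
next
  case (Suc t)
  show ?case
    using Suc pol wf by (auto simp: act_policy_def intro!: sum_nonneg mult_nonneg_nonneg jP_nonneg)
qed

lemma reach_n_Tg: "s \<in> Tg \<Longrightarrow> reach_n G Tg Av \<pi> n s = 1"
  by (cases n) auto

lemma reach_n_Av: "s \<in> Av \<Longrightarrow> Tg \<inter> Av = {} \<Longrightarrow> reach_n G Tg Av \<pi> n s = 0"
  by (cases n) auto

lemma reach_n_bounds:
  assumes wf: "well_formed_game G" and pol: "act_policy G \<pi>" and s: "s \<in> jS G"
  shows "0 \<le> reach_n G Tg Av \<pi> n s \<and> reach_n G Tg Av \<pi> n s \<le> 1"
  using s
proof (induction n arbitrary: s)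
  case 0 then show ?case by simp
next
  case (Suc n)
  have nn: "0 \<le> (\<Sum>a\<in>jA G. \<pi> s a * (\<Sum>s'\<in>jS G. jP G s a s' * reach_n G Tg Av \<pi> n s'))"
    using Suc pol wf by (auto simp: act_policy_def intro!: sum_nonneg mult_nonneg_nonneg jP_nonneg)
  have "(\<Sum>a\<in>jA G. \<pi> s a * (\<Sum>s'\<in>jS G. jP G s a s' * reach_n G Tg Av \<pi> n s')) \<le>
        (\<Sum>a\<in>jA G. \<pi> s a * (\<Sum>s'\<in>jS G. jP G s a s'))"
    using Suc pol wf by (auto simp: act_policy_def intro!: sum_mono mult_left_mono jP_nonneg
        mult_right_le_one_le)
  also have "\<dots> = (\<Sum>a\<in>jA G. \<pi> s a)"
    using Suc wf by (intro sum.cong refl) (simp add: jP_sum)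
  also have "\<dots> = 1" using pol Suc by (simp add: act_policy_def)
  finally show ?case using nn by auto
qed

definition Fk where
  "Fk G Tg Av \<pi> k = (\<Sum>s\<in>jS G - (Tg \<union> Av). stdist G (Tg \<union> Av) \<pi> k s *
       (\<Sum>a\<in>jA G. \<pi> s a * (\<Sum>s'\<in>Tg. jP G s a s')))"

lemma reach_ident:
  assumes wf: "well_formed_game G" and ra: "reach_avoid_obj G Tg Av" and pol: "act_policy G \<pi>"
  shows "reach_n G Tg Av \<pi> (m + n) (sinit G) = (if sinit G \<in> Tg then 1 else 0) + (\<Sum>k<m. Fk G Tg Av \<pi> k)
     + (\<Sum>s\<in>jS G - (Tg \<union> Av). stdist G (Tg \<union> Av) \<pi> m s * reach_n G Tg Av \<pi> n s)"
proof (induction m arbitrary: n)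
  case 0
  have si: "sinit G \<in> jS G" using wf by (simp add: wf_finite)
  have fin: "finite (jS G)" using wf by (simp add: wf_finite)
  have dj: "Tg \<inter> Av = {}" using ra by (simp add: reach_avoid_obj_def)
  show ?case
  proof (cases "sinit G \<in> Tg \<union> Av")
    case True
    have "(\<Sum>s\<in>jS G - (Tg \<union> Av). stdist G (Tg \<union> Av) \<pi> 0 s * reach_n G Tg Av \<pi> n s) = 0"
      using True by (intro sum.neutral) auto
    then show ?thesis using dj True by (auto simp: reach_n_Tg reach_n_Av)
  next
    case False
    have "(\<Sum>s\<in>jS G - (Tg \<union> Av). stdist G (Tg \<union> Av) \<pi> 0 s * reach_n G Tg Av \<pi> n s)
       = (\<Sum>s\<in>jS G - (Tg \<union> Av). if s = sinit G then reach_n G Tg Av \<pi> n s else 0)"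
      by (intro sum.cong refl) auto
    also have "\<dots> = reach_n G Tg Av \<pi> n (sinit G)"
      using False si fin by (simp add: sum.delta)
    finally show ?thesis using False by simp
  qed
next
  case (Suc m)
  let ?T = "Tg \<union> Av"
  let ?d = "stdist G ?T \<pi> m"
  let ?r = "reach_n G Tg Av \<pi> n"
  have fin: "finite (jS G)" using wf by (simp add: wf_finite)
  have dj: "Tg \<inter> Av = {}" and TgS: "Tg \<subseteq> jS G" and AvS: "Av \<subseteq> jS G"
    using ra by (auto simp: reach_avoid_obj_def)
  have split: "(\<Sum>s'\<in>jS G. jP G s a s' * ?r s') =
      (\<Sum>s'\<in>Tg. jP G s a s') + (\<Sum>s'\<in>jS G - ?T. jP G s a s' * ?r s')" for s a
  proof -
    have "(\<Sum>s'\<in>jS G. jP G s a s' * ?r s') = (\<Sum>s'\<in>Tg. jP G s a s' * ?r s') + (\<Sum>s'\<in>jS G - Tg. jP G s a s' * ?r s')"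
      using fin TgS by (metis (no_types, lifting) add.commute sum.subset_diff)
    also have "(\<Sum>s'\<in>jS G - Tg. jP G s a s' * ?r s') = (\<Sum>s'\<in>Av. jP G s a s' * ?r s') + (\<Sum>s'\<in>jS G - Tg - Av. jP G s a s' * ?r s')"
      using fin AvS dj by (subst sum.subset_diff[of Av "jS G - Tg"]) auto
    also have "(\<Sum>s'\<in>Av. jP G s a s' * ?r s') = 0" using dj by (simp add: reach_n_Av)
    also have "(\<Sum>s'\<in>Tg. jP G s a s' * ?r s') = (\<Sum>s'\<in>Tg. jP G s a s')" by (simp add: reach_n_Tg)
    also have "jS G - Tg - Av = jS G - ?T" by auto
    finally show ?thesis by simp
  qed
  have "(\<Sum>s\<in>jS G - ?T. ?d s * reach_n G Tg Av \<pi> (Suc n) s) =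
        (\<Sum>s\<in>jS G - ?T. ?d s * (\<Sum>a\<in>jA G. \<pi> s a * ((\<Sum>s'\<in>Tg. jP G s a s') + (\<Sum>s'\<in>jS G - ?T. jP G s a s' * ?r s'))))"
    by (intro sum.cong refl) (simp add: split)
  also have "\<dots> = Fk G Tg Av \<pi> m + (\<Sum>s\<in>jS G - ?T. ?d s * (\<Sum>a\<in>jA G. \<pi> s a * (\<Sum>s'\<in>jS G - ?T. jP G s a s' * ?r s')))"
    unfolding Fk_def by (simp add: distrib_left sum.distrib)
  also have "(\<Sum>s\<in>jS G - ?T. ?d s * (\<Sum>a\<in>jA G. \<pi> s a * (\<Sum>s'\<in>jS G - ?T. jP G s a s' * ?r s')))
      = (\<Sum>s'\<in>jS G - ?T. stdist G ?T \<pi> (Suc m) s' * ?r s')"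
    unfolding swap3 by (intro sum.cong refl) auto
  finally have "(\<Sum>s\<in>jS G - ?T. ?d s * reach_n G Tg Av \<pi> (Suc n) s) = 
     Fk G Tg Av \<pi> m + (\<Sum>s'\<in>jS G - ?T. stdist G ?T \<pi> (Suc m) s' * ?r s')" .
  then show ?case using Suc.IH[of "Suc n"] by simp
qed




lemma reach_n_sinit:
  assumes wf: "well_formed_game G" and ra: "reach_avoid_obj G Tg Av" and pol: "act_policy G \<pi>"
  shows "reach_n G Tg Av \<pi> m (sinit G) = (if sinit G \<in> Tg then 1 else 0) + (\<Sum>k<m. Fk G Tg Av \<pi> k)"
  using reach_ident[OF wf ra pol, of m 0] by simp

lemma Fk_nonneg:
  assumes wf: "well_formed_game G" and ra: "reach_avoid_obj G Tg Av" and pol: "act_policy G \<pi>"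
  shows "0 \<le> Fk G Tg Av \<pi> k"
  unfolding Fk_def using wf pol ra
  by (auto simp: act_policy_def reach_avoid_obj_def
      intro!: sum_nonneg mult_nonneg_nonneg jP_nonneg stdist_nonneg)

lemma reach_prob_le1:
  assumes wf: "well_formed_game G" and ra: "reach_avoid_obj G Tg Av" and pol: "act_policy G \<pi>"
  shows "reach_prob G Tg Av \<pi> \<le> 1"
proof -
  let ?X = "\<lambda>n. reach_n G Tg Av \<pi> n (sinit G)"
  have inc: "incseq ?X"
    unfolding reach_n_sinit[OF wf ra pol]
    by (intro incseq_SucI) (simp add: Fk_nonneg[OF wf ra pol])
  have b: "\<forall>i. ?X i \<le> 1" using reach_n_bounds[OF wf pol] wf by (simp add: wf_finite)
  obtain L where L: "?X \<longlonglongrightarrow> L" using incseq_convergent[OF inc b] by blast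
  have "convergent ?X" using L by (auto simp: convergent_def)
  then show ?thesis unfolding reach_prob_def using b by (intro lim_le) auto
qed

lemma vstar_ge:
  assumes wf: "well_formed_game G" and ra: "reach_avoid_obj G Tg Av" and pol: "act_policy G \<pi>"
  shows "reach_prob G Tg Av \<pi> \<le> vstar G Tg Av"
  unfolding vstar_def
  by (rule cSUP_upper) (use pol reach_prob_le1[OF wf ra] in \<open>auto intro!: bdd_aboveI2\<close>)

lemma vstar_Tg:
  assumes pol: "act_policy G \<pi>" and s: "sinit G \<in> Tg"
  shows "vstar G Tg Av = 1"
proof -
  have "reach_prob G Tg Av p = 1" for p
    unfolding reach_prob_def using s by (simp add: reach_n_Tg)
  moreover have "Collect (act_policy G) \<noteq> {}" using pol by auto
  ultimately show ?thesis unfolding vstar_def by simp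
qed

lemma summable_stdist:
  assumes wf: "well_formed_game G" and pol: "act_policy G \<pi>" and fo: "finite_occ G T \<pi>"
    and s: "s \<in> jS G - T"
  shows "summable (\<lambda>t. stdist G T \<pi> t s)"
proof -
  have "summable (\<lambda>t. \<Sum>a\<in>jA G. stdist G T \<pi> t s * \<pi> s a)"
    using fo s by (intro summable_sum) (auto simp: finite_occ_def)
  moreover have "(\<Sum>a\<in>jA G. stdist G T \<pi> t s * \<pi> s a) = stdist G T \<pi> t s" for t
    using pol s by (simp add: sum_distrib_left[symmetric] act_policy_def)
  ultimately show ?thesis by simp
qed

lemma reach_prob_occ:
  assumes wf: "well_formed_game G" and ra: "reach_avoid_obj G Tg Av" and pol: "act_policy G \<pi>"
    and fo: "finite_occ G (Tg \<union> Av) \<pi>"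
  shows "reach_prob G Tg Av \<pi> = (if sinit G \<in> Tg then 1 else 0) +
     (\<Sum>s\<in>jS G - (Tg \<union> Av). \<Sum>a\<in>jA G. \<Sum>s'\<in>Tg. occ G (Tg \<union> Av) \<pi> s a * jP G s a s')"
proof -
  let ?T = "Tg \<union> Av"
  have Fk_eq: "Fk G Tg Av \<pi> k = (\<Sum>s\<in>jS G - ?T. \<Sum>a\<in>jA G. (stdist G ?T \<pi> k s * \<pi> s a) * (\<Sum>s'\<in>Tg. jP G s a s'))" for k
    unfolding Fk_def by (simp add: sum_distrib_left mult.assoc)
  have sm: "summable (\<lambda>k. stdist G ?T \<pi> k s * \<pi> s a * (\<Sum>s'\<in>Tg. jP G s a s'))"
    if "s \<in> jS G - ?T" "a \<in> jA G" for s a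
    using fo that by (auto simp: finite_occ_def intro: summable_mult2[of "\<lambda>t. stdist _ _ _ t _ * _"])
  have "(\<lambda>k. Fk G Tg Av \<pi> k) sums (\<Sum>s\<in>jS G - ?T. \<Sum>a\<in>jA G. occ G ?T \<pi> s a * (\<Sum>s'\<in>Tg. jP G s a s'))"
    unfolding Fk_eq
  proof (intro sums_sum)
    fix s a assume "s \<in> jS G - ?T" "a \<in> jA G"
    then have "summable (\<lambda>k. stdist G ?T \<pi> k s * \<pi> s a)" using fo by (auto simp: finite_occ_def)
    from sums_mult2[OF summable_sums[OF this]]
    show "(\<lambda>k. stdist G ?T \<pi> k s * \<pi> s a * (\<Sum>s'\<in>Tg. jP G s a s')) sums (occ G ?T \<pi> s a * (\<Sum>s'\<in>Tg. jP G s a s'))"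
      unfolding occ_def .
  qed
  then have "(\<lambda>m. \<Sum>k<m. Fk G Tg Av \<pi> k) \<longlonglongrightarrow> (\<Sum>s\<in>jS G - ?T. \<Sum>a\<in>jA G. occ G ?T \<pi> s a * (\<Sum>s'\<in>Tg. jP G s a s'))"
    by (simp add: sums_def)
  then have "(\<lambda>m. reach_n G Tg Av \<pi> m (sinit G)) \<longlonglongrightarrow> (if sinit G \<in> Tg then 1 else 0) +
      (\<Sum>s\<in>jS G - ?T. \<Sum>a\<in>jA G. occ G ?T \<pi> s a * (\<Sum>s'\<in>Tg. jP G s a s'))"
    unfolding reach_n_sinit[OF wf ra pol] by (intro tendsto_add tendsto_const)
  then show ?thesis unfolding reach_prob_def by (simp add: limI sum_distrib_left)
qed

lemma occ_flow:
  assumes wf: "well_formed_game G" and pol: "act_policy G \<pi>" and fo: "finite_occ G T \<pi>"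
    and s: "s \<in> jS G - T"
  shows "(\<Sum>a\<in>jA G. occ G T \<pi> s a) =
     (\<Sum>s'\<in>jS G - T. \<Sum>b\<in>jA G. occ G T \<pi> s' b * jP G s' b s) + (if s = sinit G then 1 else 0)"
proof -
  let ?d = "\<lambda>t s. stdist G T \<pi> t s"
  have sd: "summable (\<lambda>t. ?d t s')" if "s' \<in> jS G - T" for s'
    using summable_stdist[OF wf pol fo that] .
  have "(\<Sum>a\<in>jA G. occ G T \<pi> s a) = (\<Sum>a\<in>jA G. (\<Sum>t. ?d t s) * \<pi> s a)"
    unfolding occ_def by (intro sum.cong refl suminf_mult2[symmetric] sd[OF s])
  also have "\<dots> = (\<Sum>t. ?d t s)"
    using pol s by (simp add: sum_distrib_left[symmetric] act_policy_def)
  also have "\<dots> = (\<Sum>t. ?d (Suc t) s) + ?d 0 s"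
    using suminf_split_head[OF sd[OF s]] by simp
  also have "(\<Sum>t. ?d (Suc t) s) = (\<Sum>t. \<Sum>s'\<in>jS G - T. \<Sum>b\<in>jA G. (?d t s' * \<pi> s' b) * jP G s' b s)"
    using s by (simp add: sum_distrib_left mult.assoc)
  also have "\<dots> = (\<Sum>s'\<in>jS G - T. \<Sum>b\<in>jA G. (\<Sum>t. ?d t s' * \<pi> s' b) * jP G s' b s)"
  proof -
    have sm: "summable (\<lambda>t. ?d t s' * \<pi> s' b * jP G s' b s)" if "s' \<in> jS G - T" "b \<in> jA G" for s' b
      using fo that by (auto simp: finite_occ_def intro: summable_mult2[of "\<lambda>t. stdist _ _ _ t _ * _"])
    have "(\<Sum>t. \<Sum>s'\<in>jS G - T. \<Sum>b\<in>jA G. (?d t s' * \<pi> s' b) * jP G s' b s)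
        = (\<Sum>s'\<in>jS G - T. \<Sum>t. \<Sum>b\<in>jA G. (?d t s' * \<pi> s' b) * jP G s' b s)"
      by (rule suminf_sum) (use sm in \<open>auto intro!: summable_sum\<close>)
    also have "\<dots> = (\<Sum>s'\<in>jS G - T. \<Sum>b\<in>jA G. \<Sum>t. (?d t s' * \<pi> s' b) * jP G s' b s)"
      by (intro sum.cong refl suminf_sum) (use sm in auto)
    also have "\<dots> = (\<Sum>s'\<in>jS G - T. \<Sum>b\<in>jA G. (\<Sum>t. ?d t s' * \<pi> s' b) * jP G s' b s)"
      by (intro sum.cong refl suminf_mult2[symmetric]) (use fo in \<open>auto simp: finite_occ_def\<close>)
    finally show ?thesis .
  qed
  finally show ?thesis using s by (simp add: occ_def)
qed




lemma flow_sum: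
  assumes wf: "well_formed_game G" and TS: "T \<subseteq> jS G"
    and flow: "\<And>s. s \<in> jS G - T \<Longrightarrow> (\<Sum>a\<in>jA G. y s a) =
        (\<Sum>s'\<in>jS G - T. \<Sum>b\<in>jA G. y s' b * jP G s' b s) + e s"
  shows "(\<Sum>s'\<in>jS G - T. \<Sum>b\<in>jA G. y s' b * (\<Sum>s\<in>T. jP G s' b s)) = (\<Sum>s\<in>jS G - T. e s)"
proof -
  have fin: "finite (jS G)" "finite (jA G)" using wf by (auto simp: wf_finite)
  have P1: "(\<Sum>s\<in>jS G - T. jP G s' b s) = 1 - (\<Sum>s\<in>T. jP G s' b s)" if "s' \<in> jS G - T" "b \<in> jA G" for s' b
    using jP_sum[OF wf, of s' b] that fin TS by (simp add: sum.subset_diff[of T "jS G"])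
  have "(\<Sum>s\<in>jS G - T. \<Sum>a\<in>jA G. y s a) = (\<Sum>s\<in>jS G - T. (\<Sum>s'\<in>jS G - T. \<Sum>b\<in>jA G. y s' b * jP G s' b s) + e s)"
    by (intro sum.cong refl flow)
  also have "\<dots> = (\<Sum>s'\<in>jS G - T. \<Sum>b\<in>jA G. y s' b * (\<Sum>s\<in>jS G - T. jP G s' b s)) + (\<Sum>s\<in>jS G - T. e s)"
    by (simp add: sum.distrib sum_distrib_left) (subst sum.swap, rule sum.cong[OF refl], rule sum.swap)
  also have "(\<Sum>s'\<in>jS G - T. \<Sum>b\<in>jA G. y s' b * (\<Sum>s\<in>jS G - T. jP G s' b s)) =
     (\<Sum>s'\<in>jS G - T. \<Sum>b\<in>jA G. y s' b) - (\<Sum>s'\<in>jS G - T. \<Sum>b\<in>jA G. y s' b * (\<Sum>s\<in>T. jP G s' b s))"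
    by (simp add: P1 right_diff_distrib sum_subtractf)
  finally show ?thesis by simp
qed




lemma logsum2:
  fixes u v U V :: real
  assumes "0 \<le> u" "0 \<le> v" "u \<le> U" "v \<le> V"
  shows "(u + v) * ln ((u + v) / (U + V)) \<le> u * ln (u / U) + v * ln (v / V)"
proof (cases "u = 0 \<or> v = 0")
  case True
  then show ?thesis
  proof
    assume u: "u = 0"
    show ?thesis
    proof (cases "v = 0")
      case True then show ?thesis using u by simp
    next
      case False
      then have "0 < v" using assms by simp
      then have "ln (v / (U + V)) \<le> ln (v / V)"
        using assms u by (intro ln_mono) (auto intro!: divide_left_mono mult_pos_pos)
      then show ?thesis using u \<open>0 < v\<close> by (simp add: mult_left_mono)
    qed
  next
    assume v: "v = 0"
    show ?thesis
    proof (cases "u = 0")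
      case True then show ?thesis using v by simp
    next
      case False
      then have "0 < u" using assms by simp
      then have "ln (u / (U + V)) \<le> ln (u / U)"
        using assms v by (intro ln_mono) (auto intro!: divide_left_mono mult_pos_pos)
      then show ?thesis using v \<open>0 < u\<close> by (simp add: mult_left_mono)
    qed
  qed
next
  case False
  then have pos: "0 < u" "0 < v" "0 < U" "0 < V" using assms by auto
  define p where "p = U * (u + v) / (u * (U + V))"
  define q where "q = V * (u + v) / (v * (U + V))"
  have pp: "0 < p" "0 < q" using pos by (auto simp: p_def q_def)
  have "ln p \<le> p - 1" "ln q \<le> q - 1" using pp by (auto intro!: ln_le_minus_one)
  then have "u * ln p + v * ln q \<le> u * (p - 1) + v * (q - 1)"
    using pos by (intro add_mono mult_left_mono) auto
  also have "u * (p - 1) + v * (q - 1) = 0"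
  proof -
    have a: "u * p = U * (u + v) / (U + V)" "v * q = V * (u + v) / (U + V)"
      using pos by (auto simp: p_def q_def)
    have "U * (u + v) / (U + V) + V * (u + v) / (U + V) = u + v"
      using pos by (simp add: add_divide_distrib[symmetric] distrib_right[symmetric])
    then show ?thesis using a by (simp add: algebra_simps)
  qed
  finally have le: "u * ln p + v * ln q \<le> 0" .
  have lp: "ln p = ln ((u + v) / (U + V)) - ln (u / U)"
  proof -
    have "p = ((u + v) / (U + V)) / (u / U)" using pos by (simp add: p_def field_simps)
    then show ?thesis using pos by (simp add: ln_div ln_mult)
  qed
  have lq: "ln q = ln ((u + v) / (U + V)) - ln (v / V)"
  proof -
    have "q = ((u + v) / (U + V)) / (v / V)" using pos by (simp add: q_def field_simps)
    then show ?thesis using pos by (simp add: ln_div ln_mult)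
  qed
  show ?thesis using le unfolding lp lq by (simp add: algebra_simps)
qed

lemma ent_mid:
  fixes m0 m1 m2 M0 M1 M2 w :: real
  assumes "0 \<le> m0" "0 \<le> m2" "m0 \<le> M0" "m2 \<le> M2" "m0 + m2 = 2 * m1" "M0 + M2 = 2 * M1" "0 \<le> w"
  shows "2 * (m1 * w * ln (m1 / M1)) \<le> m0 * w * ln (m0 / M0) + m2 * w * ln (m2 / M2)"
proof -
  have "2 * (m1 * ln (m1 / M1)) = (m0 + m2) * ln ((m0 + m2) / (M0 + M2))"
    using assms(5,6) by (simp add: mult.assoc[symmetric])
  also have "\<dots> \<le> m0 * ln (m0 / M0) + m2 * ln (m2 / M2)"
    using assms by (intro logsum2) auto
  finally have "2 * (m1 * ln (m1 / M1)) \<le> m0 * ln (m0 / M0) + m2 * ln (m2 / M2)" .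
  from mult_left_mono[OF this assms(7)] show ?thesis by (simp add: algebra_simps)
qed

lemma sum_eq2:
  fixes f g h :: "'x \<Rightarrow> real"
  shows "(\<And>x. x \<in> A \<Longrightarrow> f x + g x = 2 * h x) \<Longrightarrow> sum f A + sum g A = 2 * sum h A"
  by (simp add: sum.distrib[symmetric] sum_distrib_left)

lemma sum_le2:
  fixes f g h :: "'x \<Rightarrow> real"
  shows "(\<And>x. x \<in> A \<Longrightarrow> 2 * h x \<le> f x + g x) \<Longrightarrow> 2 * sum h A \<le> sum f A + sum g A"
  by (simp add: sum.distrib[symmetric] sum_distrib_left sum_mono)




lemma lin_help: "(a::real) + b = 2 * c \<Longrightarrow> a * k + b * k = 2 * (c * k)"
proof -
  assume "a + b = 2 * c"
  then have "(a + b) * k = (2 * c) * k" by simp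
  then show ?thesis by (simp add: algebra_simps)
qed

lemma comb_help: "2 * (A1::real) \<le> A0 + A2 \<Longrightarrow> B0 + B2 = 2 * B1 \<Longrightarrow> (- A0 - B0) + (- A2 - B2) \<le> 2 * (- A1 - B1)"
  by (simp add: algebra_simps)

lemma cpl: "(c::real) * p * ln (c * p / c) = c * (p * ln p)"
  by (cases "c = 0") auto

lemma hterm_mid:
  assumes y: "\<And>s a. s \<in> jS G - T \<Longrightarrow> a \<in> jA G \<Longrightarrow> y0 s a = ca s * p s a \<and> y1 s a = cb s * p s a \<and> y2 s a = cc s * p s a"
    and ps: "\<And>s. s \<in> jS G - T \<Longrightarrow> (\<Sum>a\<in>jA G. p s a) = 1"
    and c: "\<And>s. s \<in> jS G - T \<Longrightarrow> ca s + cc s = 2 * cb s"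
  shows "hterm G T y0 + hterm G T y2 = 2 * hterm G T y1"
proof -
  have Ysum: "(\<Sum>b\<in>jA G. y s b) = cc s"
    if "s \<in> jS G - T" "\<And>b. b \<in> jA G \<Longrightarrow> y s b = cc s * p s b" for s y cc
    using that ps[OF that(1)] by (simp add: sum_distrib_left[symmetric])
  have A: "(\<Sum>s\<in>jS G - T. \<Sum>a\<in>jA G. y0 s a * ln (y0 s a / (\<Sum>b\<in>jA G. y0 s b))) +
           (\<Sum>s\<in>jS G - T. \<Sum>a\<in>jA G. y2 s a * ln (y2 s a / (\<Sum>b\<in>jA G. y2 s b))) =
        2 * (\<Sum>s\<in>jS G - T. \<Sum>a\<in>jA G. y1 s a * ln (y1 s a / (\<Sum>b\<in>jA G. y1 s b)))"
  proof (intro sum_eq2)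
    fix s a assume h: "s \<in> jS G - T" "a \<in> jA G"
    have s0: "(\<Sum>b\<in>jA G. y0 s b) = ca s" by (rule Ysum[OF h(1)]) (use y h in auto)
    have s1: "(\<Sum>b\<in>jA G. y1 s b) = cb s" by (rule Ysum[OF h(1)]) (use y h in auto)
    have s2: "(\<Sum>b\<in>jA G. y2 s b) = cc s" by (rule Ysum[OF h(1)]) (use y h in auto)
    show "y0 s a * ln (y0 s a / (\<Sum>b\<in>jA G. y0 s b)) + y2 s a * ln (y2 s a / (\<Sum>b\<in>jA G. y2 s b)) =
        2 * (y1 s a * ln (y1 s a / (\<Sum>b\<in>jA G. y1 s b)))"
      unfolding s0 s1 s2 using y[OF h] c[OF h(1)]
      by (simp add: cpl lin_help)
  qed
  have B: "(\<Sum>s\<in>jS G - T. \<Sum>a\<in>jA G. \<Sum>s'\<in>jS G. y0 s a * jP G s a s' * ln (jP G s a s')) +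
           (\<Sum>s\<in>jS G - T. \<Sum>a\<in>jA G. \<Sum>s'\<in>jS G. y2 s a * jP G s a s' * ln (jP G s a s')) =
        2 * (\<Sum>s\<in>jS G - T. \<Sum>a\<in>jA G. \<Sum>s'\<in>jS G. y1 s a * jP G s a s' * ln (jP G s a s'))"
  proof (intro sum_eq2)
    fix s a s' assume h: "s \<in> jS G - T" "a \<in> jA G" "s' \<in> jS G"
    show "y0 s a * jP G s a s' * ln (jP G s a s') + y2 s a * jP G s a s' * ln (jP G s a s') =
         2 * (y1 s a * jP G s a s' * ln (jP G s a s'))"
      using y[OF h(1,2)] c[OF h(1)] by (simp add: mult.assoc lin_help)
  qed
  show ?thesis unfolding hterm_def using A B by simp
qed

lemma ymarg_mid:
  assumes y: "\<And>s a. s \<in> jS G - T \<Longrightarrow> a \<in> jA G \<Longrightarrow> y0 s a + y2 s a = 2 * y1 s a"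
    and ob: "ob \<in> jO G"
  shows "ymarg G T y0 ob c lc ac + ymarg G T y2 ob c lc ac = 2 * ymarg G T y1 ob c lc ac"
  unfolding ymarg_def
  by (intro sum_eq2) (use y ob in \<open>auto simp: jS_def\<close>)

lemma ymarg_nonneg:
  assumes y: "\<And>s a. s \<in> jS G - T \<Longrightarrow> a \<in> jA G \<Longrightarrow> 0 \<le> y s a"
    and ob: "ob \<in> jO G"
  shows "0 \<le> ymarg G T y ob c lc ac"
  unfolding ymarg_def
  by (intro sum_nonneg) (use y ob in \<open>auto simp: jS_def\<close>)

lemma gterm_mid:
  assumes y: "\<And>s a. s \<in> jS G - T \<Longrightarrow> a \<in> jA G \<Longrightarrow> y0 s a + y2 s a = 2 * y1 s a"
    and n0: "\<And>s a. s \<in> jS G - T \<Longrightarrow> a \<in> jA G \<Longrightarrow> 0 \<le> y0 s a"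
    and n2: "\<And>s a. s \<in> jS G - T \<Longrightarrow> a \<in> jA G \<Longrightarrow> 0 \<le> y2 s a"
    and W: "\<And>ob. ob \<in> jO G \<Longrightarrow> 0 \<le> W ob"
    and fin: "finite (PiE c (Act G))"
  shows "gterm G T y0 W c + gterm G T y2 W c \<le> 2 * gterm G T y1 W c"
proof -
  let ?m = "\<lambda>y ob lc ac. ymarg G T y ob c lc ac"
  have A: "2 * (\<Sum>ob\<in>jO G. \<Sum>lc\<in>PiE c (Loc G). \<Sum>ac\<in>PiE c (Act G).
          ?m y1 ob lc ac * W ob * ln (?m y1 ob lc ac / (\<Sum>bc\<in>PiE c (Act G). ?m y1 ob lc bc)))
     \<le> (\<Sum>ob\<in>jO G. \<Sum>lc\<in>PiE c (Loc G). \<Sum>ac\<in>PiE c (Act G).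
          ?m y0 ob lc ac * W ob * ln (?m y0 ob lc ac / (\<Sum>bc\<in>PiE c (Act G). ?m y0 ob lc bc)))
      + (\<Sum>ob\<in>jO G. \<Sum>lc\<in>PiE c (Loc G). \<Sum>ac\<in>PiE c (Act G).
          ?m y2 ob lc ac * W ob * ln (?m y2 ob lc ac / (\<Sum>bc\<in>PiE c (Act G). ?m y2 ob lc bc)))"
  proof (intro sum_le2)
    fix ob lc ac assume h: "ob \<in> jO G" "lc \<in> PiE c (Loc G)" "ac \<in> PiE c (Act G)"
    have nn0: "0 \<le> ?m y0 ob lc bc" for bc by (rule ymarg_nonneg[OF n0 h(1)])
    have nn2: "0 \<le> ?m y2 ob lc bc" for bc by (rule ymarg_nonneg[OF n2 h(1)])
    show "2 * (?m y1 ob lc ac * W ob * ln (?m y1 ob lc ac / (\<Sum>bc\<in>PiE c (Act G). ?m y1 ob lc bc)))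
       \<le> ?m y0 ob lc ac * W ob * ln (?m y0 ob lc ac / (\<Sum>bc\<in>PiE c (Act G). ?m y0 ob lc bc)) +
         ?m y2 ob lc ac * W ob * ln (?m y2 ob lc ac / (\<Sum>bc\<in>PiE c (Act G). ?m y2 ob lc bc))"
    proof (rule ent_mid)
      show "0 \<le> ?m y0 ob lc ac" "0 \<le> ?m y2 ob lc ac" by (rule nn0, rule nn2)
      show "?m y0 ob lc ac \<le> (\<Sum>bc\<in>PiE c (Act G). ?m y0 ob lc bc)"
        by (rule member_le_sum[OF h(3) _ fin]) (rule nn0)
      show "?m y2 ob lc ac \<le> (\<Sum>bc\<in>PiE c (Act G). ?m y2 ob lc bc)"
        by (rule member_le_sum[OF h(3) _ fin]) (rule nn2)
      show "?m y0 ob lc ac + ?m y2 ob lc ac = 2 * ?m y1 ob lc ac"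
        by (rule ymarg_mid[OF y h(1)])
      show "(\<Sum>bc\<in>PiE c (Act G). ?m y0 ob lc bc) + (\<Sum>bc\<in>PiE c (Act G). ?m y2 ob lc bc) =
          2 * (\<Sum>bc\<in>PiE c (Act G). ?m y1 ob lc bc)"
        by (intro sum_eq2 ymarg_mid[OF y h(1)])
      show "0 \<le> W ob" by (rule W[OF h(1)])
    qed
  qed
  have B: "(\<Sum>ob\<in>jO G. \<Sum>lc\<in>PiE c (Loc G). \<Sum>ac\<in>PiE c (Act G).
          \<Sum>(o1, l1)\<in>PiE c (Obs G) \<times> PiE c (Loc G).
          ?m y0 ob lc ac * W ob * Pc G c ob lc ac o1 l1 * ln (Pc G c ob lc ac o1 l1)) +
        (\<Sum>ob\<in>jO G. \<Sum>lc\<in>PiE c (Loc G). \<Sum>ac\<in>PiE c (Act G).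
          \<Sum>(o1, l1)\<in>PiE c (Obs G) \<times> PiE c (Loc G).
          ?m y2 ob lc ac * W ob * Pc G c ob lc ac o1 l1 * ln (Pc G c ob lc ac o1 l1)) =
        2 * (\<Sum>ob\<in>jO G. \<Sum>lc\<in>PiE c (Loc G). \<Sum>ac\<in>PiE c (Act G).
          \<Sum>(o1, l1)\<in>PiE c (Obs G) \<times> PiE c (Loc G).
          ?m y1 ob lc ac * W ob * Pc G c ob lc ac o1 l1 * ln (Pc G c ob lc ac o1 l1))"
    apply (intro sum_eq2)
    subgoal for ob lc ac x
      using ymarg_mid[OF y, where ob=ob and c=c and lc=lc and ac=ac] by (cases x) (simp add: mult.assoc lin_help)
    done
  show ?thesis unfolding gterm_def by (rule comb_help[OF A B])
qed

lemma PhiV_mid: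
  assumes ys: "\<And>s a. s \<in> jS G - T \<Longrightarrow> a \<in> jA G \<Longrightarrow> y0 s a + y2 s a = 2 * y1 s a"
    and n0: "\<And>s a. s \<in> jS G - T \<Longrightarrow> a \<in> jA G \<Longrightarrow> 0 \<le> y0 s a"
    and n2: "\<And>s a. s \<in> jS G - T \<Longrightarrow> a \<in> jA G \<Longrightarrow> 0 \<le> y2 s a"
    and W1: "\<And>ob i. ob \<in> jO G \<Longrightarrow> i \<in> agents G \<Longrightarrow> 0 \<le> W1 ob i"
    and W2: "\<And>ob c. ob \<in> jO G \<Longrightarrow> c \<in> Acomm G \<Longrightarrow> 0 \<le> W2 ob c"
    and fin1: "\<And>i. i \<in> agents G \<Longrightarrow> finite (PiE {i} (Act G))"
    and fin2: "\<And>c. c \<in> Acomm G \<Longrightarrow> finite (PiE c (Act G))"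
    and h: "hterm G T y0 + hterm G T y2 = 2 * hterm G T y1"
  shows "PhiV G T y0 W1 W2 + PhiV G T y2 W1 W2 \<le> 2 * PhiV G T y1 W1 W2"
proof -
  have a: "(\<Sum>i\<in>agents G. gterm G T y0 (\<lambda>ob. W1 ob i) {i}) + (\<Sum>i\<in>agents G. gterm G T y2 (\<lambda>ob. W1 ob i) {i})
     \<le> 2 * (\<Sum>i\<in>agents G. gterm G T y1 (\<lambda>ob. W1 ob i) {i})"
    by (simp add: sum.distrib[symmetric] sum_distrib_left)
       (intro sum_mono gterm_mid[OF ys n0 n2] W1 fin1; assumption)
  have b: "(\<Sum>c\<in>Acomm G. gterm G T y0 (\<lambda>ob. W2 ob c) c) + (\<Sum>c\<in>Acomm G. gterm G T y2 (\<lambda>ob. W2 ob c) c)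
     \<le> 2 * (\<Sum>c\<in>Acomm G. gterm G T y1 (\<lambda>ob. W2 ob c) c)"
    by (simp add: sum.distrib[symmetric] sum_distrib_left)
       (intro sum_mono gterm_mid[OF ys n0 n2] W2 fin2; assumption)
  show ?thesis unfolding PhiV_def using a b h by (simp only: distrib_left mult_minus_right)
qed

definition zero_at where
  "zero_at G T y ob \<longleftrightarrow> (\<forall>l\<in>jL G. (ob, l) \<notin> T \<longrightarrow> (\<forall>a\<in>jA G. y (ob, l) a = 0))"

lemma ymarg_zero: "zero_at G T y ob \<Longrightarrow> ymarg G T y ob c lc ac = 0"
  unfolding zero_at_def ymarg_def by (intro sum.neutral) auto

lemma gterm_cong:
  assumes "\<And>ob. ob \<in> jO G \<Longrightarrow> zero_at G T y ob \<or> W ob = W' ob"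
  shows "gterm G T y W c = gterm G T y W' c"
proof -
  have e: "ymarg G T y ob c lc ac * W ob = ymarg G T y ob c lc ac * W' ob" if "ob \<in> jO G" for ob lc ac
    using assms[OF that] ymarg_zero by auto
  show ?thesis unfolding gterm_def
    by (intro arg_cong2[where f="(-)"] arg_cong[where f=uminus] sum.cong refl)
       (auto simp: e split: prod.splits)
qed

lemma PhiV_cong:
  assumes "\<And>ob. ob \<in> jO G \<Longrightarrow> zero_at G T y ob \<or>
      ((\<forall>i\<in>agents G. W1 ob i = W1' ob i) \<and> (\<forall>c\<in>Acomm G. W2 ob c = W2' ob c))"
  shows "PhiV G T y W1 W2 = PhiV G T y W1' W2'"
  unfolding PhiV_def
  by (intro arg_cong2[where f="(+)"] refl sum.cong gterm_cong) (use assms in auto)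




locale setting =
  fixes G :: "('o, 'l, 'a) game"
    and Tg Av :: "((nat \<Rightarrow> 'o) \<times> (nat \<Rightarrow> 'l)) set"
    and xs :: "(nat \<Rightarrow> 'o) \<times> (nat \<Rightarrow> 'l) \<Rightarrow> (nat \<Rightarrow> 'a) \<Rightarrow> real"
    and xo :: "(nat \<Rightarrow> 'o) \<Rightarrow> nat set \<Rightarrow> real"
    and pc :: "(nat \<Rightarrow> 'o) \<Rightarrow> nat set \<Rightarrow> real"
    and pa :: "(nat \<Rightarrow> 'o) \<times> (nat \<Rightarrow> 'l) \<Rightarrow> (nat \<Rightarrow> 'a) \<Rightarrow> real"
  assumes wf: "well_formed_game G"
    and ra: "reach_avoid_obj G Tg Av"
    and opt: "opt_optimal G Tg Av xs xo"
    and cp: "comm_policy G pc"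
    and ap: "act_policy G pa"
    and pc_def: "\<forall>ob\<in>jO G. (\<Sum>d\<in>Acomm G. xo ob d) \<noteq> 0 \<longrightarrow>
           (\<forall>c\<in>Acomm G. pc ob c = xo ob c / (\<Sum>d\<in>Acomm G. xo ob d))"
    and pa_def: "\<forall>s\<in>jS G - (Tg \<union> Av). (\<Sum>b\<in>jA G. xs s b) \<noteq> 0 \<longrightarrow>
           (\<forall>a\<in>jA G. pa s a = xs s a / (\<Sum>b\<in>jA G. xs s b))"
begin

abbreviation "T \<equiv> Tg \<union> Av"
definition "X s = (\<Sum>b\<in>jA G. xs s b)"
abbreviation "d t s \<equiv> stdist G T pa t s"

lemma fins: "finite (jS G)" "finite (jA G)" "finite (jO G)" "finite (jL G)" "finite (Acomm G)"
    "finite (agents G)" "sinit G \<in> jS G"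
  using wf_finite[OF wf] by auto

lemma TS: "T \<subseteq> jS G" "Tg \<inter> Av = {}" using ra by (auto simp: reach_avoid_obj_def)

lemma feas: "opt_feasible G Tg Av xs xo" using opt by (simp add: opt_optimal_def)

lemma xs_nonneg: "s \<in> jS G - T \<Longrightarrow> a \<in> jA G \<Longrightarrow> 0 \<le> xs s a"
  using feas by (auto simp: opt_feasible_def Let_def)
lemma xo_nonneg: "ob \<in> jO G \<Longrightarrow> c \<in> Acomm G \<Longrightarrow> 0 \<le> xo ob c"
  using feas by (auto simp: opt_feasible_def Let_def)
lemma xs_flow: "s \<in> jS G - T \<Longrightarrow> (\<Sum>a\<in>jA G. xs s a) =
           (\<Sum>s'\<in>jS G - T. \<Sum>b\<in>jA G. xs s' b * jP G s' b s) + (if s = sinit G then 1 else 0)"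
  using feas by (auto simp: opt_feasible_def Let_def)
lemma xs_reach: "vstar G Tg Av \<le> (\<Sum>s\<in>jS G - T. \<Sum>a\<in>jA G. \<Sum>s'\<in>Tg. xs s a * jP G s a s')"
  using feas by (auto simp: opt_feasible_def Let_def)
lemma xs_cons: "ob \<in> jO G \<Longrightarrow> (\<Sum>l\<in>{l\<in>jL G. (ob, l) \<notin> T}. \<Sum>a\<in>jA G. xs (ob, l) a) = (\<Sum>c\<in>Acomm G. xo ob c)"
  using feas by (auto simp: opt_feasible_def Let_def)

lemma X_nonneg: "s \<in> jS G - T \<Longrightarrow> 0 \<le> X s"
  unfolding X_def by (intro sum_nonneg xs_nonneg)

lemma xs_eq: assumes "s \<in> jS G - T" "a \<in> jA G" shows "xs s a = X s * pa s a"
proof (cases "X s = 0")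
  case True
  then have "\<forall>b\<in>jA G. xs s b = 0"
    using assms fins xs_nonneg unfolding X_def by (subst sum_nonneg_eq_0_iff[symmetric]) auto
  then show ?thesis using True assms by simp
next
  case False
  then show ?thesis using pa_def assms unfolding X_def by auto
qed

lemma pa_nonneg: "s \<in> jS G \<Longrightarrow> a \<in> jA G \<Longrightarrow> 0 \<le> pa s a"
  using ap by (auto simp: act_policy_def)

lemma pa_sum: "s \<in> jS G \<Longrightarrow> (\<Sum>a\<in>jA G. pa s a) = 1"
  using ap by (auto simp: act_policy_def)

lemma d_suc: "s \<in> jS G - T \<Longrightarrow> d (Suc t) s = (\<Sum>s'\<in>jS G - T. d t s' * (\<Sum>a\<in>jA G. pa s' a * jP G s' a s))"
  by simp

lemma d_partial: "s \<in> jS G - T \<Longrightarrow> (\<Sum>k<n. d k s) \<le> X s"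
proof (induction n arbitrary: s)
  case 0 then show ?case using X_nonneg by simp
next
  case (Suc n)
  have "(\<Sum>k<Suc n. d k s) = d 0 s + (\<Sum>k<n. d (Suc k) s)"
    by (rule sum.lessThan_Suc_shift)
  also have "(\<Sum>k<n. d (Suc k) s) = (\<Sum>s'\<in>jS G - T. (\<Sum>k<n. d k s') * (\<Sum>a\<in>jA G. pa s' a * jP G s' a s))"
    using Suc.prems by (simp add: sum_distrib_right) (rule sum.swap)
  also have "\<dots> \<le> (\<Sum>s'\<in>jS G - T. X s' * (\<Sum>a\<in>jA G. pa s' a * jP G s' a s))"
    using Suc.prems fins
    by (intro sum_mono mult_right_mono Suc.IH sum_nonneg mult_nonneg_nonneg pa_nonneg jP_nonneg[OF wf]) auto
  also have "\<dots> = (\<Sum>s'\<in>jS G - T. \<Sum>b\<in>jA G. xs s' b * jP G s' b s)"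
    by (intro sum.cong refl) (simp add: sum_distrib_left xs_eq mult.assoc)
  also have "d 0 s + \<dots> = X s"
    using xs_flow[OF Suc.prems] Suc.prems by (simp add: X_def)
  finally show ?case by simp
qed

lemma d_nonneg: "s \<in> jS G \<Longrightarrow> 0 \<le> d t s"
  by (rule stdist_nonneg[OF wf ap])

lemma d_summable: "s \<in> jS G - T \<Longrightarrow> summable (\<lambda>t. d t s)"
  by (rule summableI_nonneg_bounded[where x="X s"]) (auto intro: d_nonneg d_partial)

definition "D s = (\<Sum>t. d t s)"

lemma D_le: "s \<in> jS G - T \<Longrightarrow> D s \<le> X s"
  unfolding D_def by (rule suminf_le_const[OF d_summable]) (auto intro: d_partial)

lemma D_nonneg: "s \<in> jS G - T \<Longrightarrow> 0 \<le> D s"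
  unfolding D_def by (rule suminf_nonneg[OF d_summable]) (auto intro: d_nonneg)

lemma fo: "finite_occ G T pa"
  unfolding finite_occ_def by (auto intro: summable_mult2 d_summable)

lemma occ_eq: "s \<in> jS G - T \<Longrightarrow> occ G T pa s a = D s * pa s a"
  unfolding occ_def D_def by (rule suminf_mult2[symmetric, OF d_summable])

lemma occ_nonneg: "s \<in> jS G - T \<Longrightarrow> a \<in> jA G \<Longrightarrow> 0 \<le> occ G T pa s a"
  by (simp add: occ_eq D_nonneg pa_nonneg)

lemma occ_le: "s \<in> jS G - T \<Longrightarrow> a \<in> jA G \<Longrightarrow> occ G T pa s a \<le> xs s a"
  by (simp add: occ_eq xs_eq D_le pa_nonneg mult_right_mono)

lemma sinit_notin_Tg: "sinit G \<notin> Tg"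
proof
  assume s: "sinit G \<in> Tg"
  have "(\<Sum>s'\<in>jS G - T. \<Sum>b\<in>jA G. xs s' b * (\<Sum>s\<in>T. jP G s' b s)) = (\<Sum>s\<in>jS G - T. (if s = sinit G then 1 else 0))"
    by (rule flow_sum[OF wf TS(1)]) (rule xs_flow)
  also have "\<dots> = 0" using s by (intro sum.neutral) auto
  finally have z: "(\<Sum>s'\<in>jS G - T. \<Sum>b\<in>jA G. xs s' b * (\<Sum>s\<in>T. jP G s' b s)) = 0" .
  have "(\<Sum>s\<in>jS G - T. \<Sum>a\<in>jA G. \<Sum>s'\<in>Tg. xs s a * jP G s a s') \<le>
        (\<Sum>s'\<in>jS G - T. \<Sum>b\<in>jA G. xs s' b * (\<Sum>s\<in>T. jP G s' b s))"
  proof (intro sum_mono)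
    fix s' b assume h: "s' \<in> jS G - T" "b \<in> jA G"
    have "(\<Sum>s\<in>Tg. jP G s' b s) \<le> (\<Sum>s\<in>T. jP G s' b s)"
      using h TS fins by (intro sum_mono2) (auto intro!: jP_nonneg[OF wf] finite_subset[OF _ fins(1)])
    then show "(\<Sum>s\<in>Tg. xs s' b * jP G s' b s) \<le> xs s' b * (\<Sum>s\<in>T. jP G s' b s)"
      using xs_nonneg[OF h] by (simp add: sum_distrib_left[symmetric] mult_left_mono)
  qed
  then have "vstar G Tg Av \<le> 0" using xs_reach z by linarith
  moreover have "vstar G Tg Av = 1" by (rule vstar_Tg[OF ap s])
  ultimately show False by simp
qed

end



lemma zero_at_I:
  fixes y :: "(nat \<Rightarrow> 'o) \<times> (nat \<Rightarrow> 'l) \<Rightarrow> (nat \<Rightarrow> 'a) \<Rightarrow> real"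
  assumes fin: "finite (jL G)" "finite (jA G)" and ob: "ob \<in> jO G"
    and nn: "\<And>s a. s \<in> jS G - T \<Longrightarrow> a \<in> jA G \<Longrightarrow> 0 \<le> y s a"
    and z: "(\<Sum>l\<in>{l\<in>jL G. (ob, l) \<notin> T}. \<Sum>a\<in>jA G. y (ob, l) a) = 0"
  shows "zero_at G T y ob"
proof -
  have nn': "0 \<le> y (ob, l) a" if "l \<in> {l\<in>jL G. (ob, l) \<notin> T}" "a \<in> jA G" for l a
    using nn[of "(ob, l)" a] that ob by (auto simp: jS_def)
  have fl: "finite {l\<in>jL G. (ob, l) \<notin> T}" using fin by auto
  have "\<forall>l\<in>{l\<in>jL G. (ob, l) \<notin> T}. (\<Sum>a\<in>jA G. y (ob, l) a) = 0"
    using sum_nonneg_eq_0_iff[OF fl, of "\<lambda>l. \<Sum>a\<in>jA G. y (ob, l) a"] z nn'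
    by (auto intro!: sum_nonneg)
  then show ?thesis unfolding zero_at_def
    using fin nn' by (auto simp: sum_nonneg_eq_0_iff)
qed

context setting
begin

abbreviation "y0 \<equiv> occ G T pa"

lemma circ_Tg:
  "(\<Sum>s\<in>jS G - T. \<Sum>a\<in>jA G. \<Sum>s'\<in>Tg. xs s a * jP G s a s') =
   (\<Sum>s\<in>jS G - T. \<Sum>a\<in>jA G. \<Sum>s'\<in>Tg. y0 s a * jP G s a s')"
proof -
  let ?c = "\<lambda>s a. xs s a - y0 s a"
  have cflow: "(\<Sum>a\<in>jA G. ?c s a) = (\<Sum>s'\<in>jS G - T. \<Sum>b\<in>jA G. ?c s' b * jP G s' b s) + 0"
    if "s \<in> jS G - T" for s
    using xs_flow[OF that] occ_flow[OF wf ap fo that]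
    by (simp add: sum_subtractf left_diff_distrib)
  have z: "(\<Sum>s'\<in>jS G - T. \<Sum>b\<in>jA G. ?c s' b * (\<Sum>s\<in>T. jP G s' b s)) = 0"
    using flow_sum[OF wf TS(1), of ?c "\<lambda>_. 0"] cflow by simp
  have cn: "0 \<le> ?c s a" if "s \<in> jS G - T" "a \<in> jA G" for s a using occ_le[OF that] by simp
  have le: "(\<Sum>s\<in>jS G - T. \<Sum>a\<in>jA G. ?c s a * (\<Sum>s'\<in>Tg. jP G s a s')) \<le>
        (\<Sum>s'\<in>jS G - T. \<Sum>b\<in>jA G. ?c s' b * (\<Sum>s\<in>T. jP G s' b s))"
  proof (intro sum_mono)
    fix s' b assume h: "s' \<in> jS G - T" "b \<in> jA G"
    have "(\<Sum>s\<in>Tg. jP G s' b s) \<le> (\<Sum>s\<in>T. jP G s' b s)"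
      using h TS fins by (intro sum_mono2) (auto intro!: jP_nonneg[OF wf] finite_subset[OF _ fins(1)])
    then show "?c s' b * (\<Sum>s\<in>Tg. jP G s' b s) \<le> ?c s' b * (\<Sum>s\<in>T. jP G s' b s)"
      using cn[OF h] by (simp add: mult_left_mono)
  qed
  have ge: "0 \<le> (\<Sum>s\<in>jS G - T. \<Sum>a\<in>jA G. ?c s a * (\<Sum>s'\<in>Tg. jP G s a s'))"
    using cn TS fins by (auto intro!: sum_nonneg mult_nonneg_nonneg jP_nonneg[OF wf])
  have "(\<Sum>s\<in>jS G - T. \<Sum>a\<in>jA G. ?c s a * (\<Sum>s'\<in>Tg. jP G s a s')) = 0" using le ge z by linarith
  moreover have "(\<Sum>s\<in>jS G - T. \<Sum>a\<in>jA G. \<Sum>s'\<in>Tg. xs s a * jP G s a s') -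
   (\<Sum>s\<in>jS G - T. \<Sum>a\<in>jA G. \<Sum>s'\<in>Tg. y0 s a * jP G s a s') =
     (\<Sum>s\<in>jS G - T. \<Sum>a\<in>jA G. ?c s a * (\<Sum>s'\<in>Tg. jP G s a s'))"
    by (simp add: sum_distrib_left left_diff_distrib sum_subtractf)
  ultimately show ?thesis by linarith
qed

lemma part1: "reach_prob G Tg Av pa = vstar G Tg Av"
proof -
  have r: "reach_prob G Tg Av pa = (\<Sum>s\<in>jS G - T. \<Sum>a\<in>jA G. \<Sum>s'\<in>Tg. y0 s a * jP G s a s')"
    using reach_prob_occ[OF wf ra ap fo] sinit_notin_Tg by simp
  show ?thesis using vstar_ge[OF wf ra ap] xs_reach circ_Tg r by linarith
qed

definition "y2 s a = 2 * xs s a - y0 s a"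
definition "M1 ob = (\<Sum>c\<in>Acomm G. xo ob c)"
definition "M2 ob = (\<Sum>l\<in>{l\<in>jL G. (ob, l) \<notin> T}. \<Sum>a\<in>jA G. y2 (ob, l) a)"
definition "xo2 ob c = (if M1 ob = 0 then 0 else xo ob c * (M2 ob / M1 ob))"
definition "W1 ob i = (\<Sum>c\<in>{c\<in>Acomm G. i \<notin> c}. xo ob c) / (\<Sum>c'\<in>Acomm G. xo ob c')"
definition "W2 ob c = xo ob c / (\<Sum>c'\<in>Acomm G. xo ob c')"

lemma y2_nonneg: "s \<in> jS G - T \<Longrightarrow> a \<in> jA G \<Longrightarrow> 0 \<le> y2 s a"
  using occ_le[of s a] xs_nonneg[of s a] by (simp add: y2_def)

lemma M1_nonneg: "ob \<in> jO G \<Longrightarrow> 0 \<le> M1 ob"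
  unfolding M1_def by (intro sum_nonneg xo_nonneg)

lemma M2_nonneg: "ob \<in> jO G \<Longrightarrow> 0 \<le> M2 ob"
  unfolding M2_def by (intro sum_nonneg y2_nonneg) (auto simp: jS_def)

lemma M1_zero: assumes "ob \<in> jO G" "M1 ob = 0" shows "zero_at G T xs ob"
  by (rule zero_at_I[OF fins(4,2) assms(1)]) (use xs_nonneg xs_cons[OF assms(1)] assms(2) in \<open>auto simp: M1_def\<close>)

lemma zero_occ: assumes "ob \<in> jO G" "zero_at G T xs ob" shows "zero_at G T y0 ob"
  using assms occ_le occ_nonneg unfolding zero_at_def
  by (metis DiffI antisym jS_def mem_Times_iff fst_conv snd_conv)

lemma zero_y2: assumes "ob \<in> jO G" "zero_at G T xs ob" shows "zero_at G T y2 ob"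
  using zero_occ[OF assms] assms unfolding zero_at_def y2_def by simp

lemma W_nonneg1: "ob \<in> jO G \<Longrightarrow> i \<in> agents G \<Longrightarrow> 0 \<le> W1 ob i"
  unfolding W1_def using xo_nonneg by (auto intro!: divide_nonneg_nonneg sum_nonneg)

lemma W_nonneg2: "ob \<in> jO G \<Longrightarrow> c \<in> Acomm G \<Longrightarrow> 0 \<le> W2 ob c"
  unfolding W2_def using xo_nonneg by (auto intro!: divide_nonneg_nonneg sum_nonneg)

lemma fin_PiE: "c \<subseteq> agents G \<Longrightarrow> finite (PiE c (Act G))"
  using wf fins(6) unfolding well_formed_game_def
  by (intro finite_PiE) (auto intro: finite_subset)

lemma f1: "opt_objective G T xs xo = PhiV G T xs W1 W2"
  unfolding opt_objective_def W1_def W2_def by (simp add: fun_eq_iff)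

lemma f0: "Dbar G T pc pa = PhiV G T y0 W1 W2"
  unfolding Dbar_def
proof (rule PhiV_cong)
  fix ob assume ob: "ob \<in> jO G"
  show "zero_at G T y0 ob \<or> ((\<forall>i\<in>agents G. (\<Sum>c\<in>{c \<in> Acomm G. i \<notin> c}. pc ob c) = W1 ob i) \<and>
      (\<forall>c\<in>Acomm G. pc ob c = W2 ob c))"
  proof (cases "M1 ob = 0")
    case True then show ?thesis using zero_occ[OF ob M1_zero[OF ob]] by simp
  next
    case False
    then have pcx: "\<And>c. c \<in> Acomm G \<Longrightarrow> pc ob c = xo ob c / M1 ob"
      using pc_def ob by (simp add: M1_def)
    have "(\<Sum>c\<in>{c \<in> Acomm G. i \<notin> c}. pc ob c) = W1 ob i" for i
      unfolding W1_def M1_def[symmetric] sum_divide_distrib by (intro sum.cong refl) (simp add: pcx)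
    moreover have "pc ob c = W2 ob c" if "c \<in> Acomm G" for c
      unfolding W2_def M1_def[symmetric] using pcx[OF that] .
    ultimately show ?thesis by simp
  qed
qed

lemma f2: "opt_objective G T y2 xo2 = PhiV G T y2 W1 W2"
  unfolding opt_objective_def
proof (rule PhiV_cong)
  fix ob assume ob: "ob \<in> jO G"
  show "zero_at G T y2 ob \<or> ((\<forall>i\<in>agents G. (\<Sum>c\<in>{c \<in> Acomm G. i \<notin> c}. xo2 ob c) / (\<Sum>c'\<in>Acomm G. xo2 ob c') = W1 ob i) \<and>
      (\<forall>c\<in>Acomm G. xo2 ob c / (\<Sum>c'\<in>Acomm G. xo2 ob c') = W2 ob c))"
  proof (cases "M1 ob = 0")
    case True then show ?thesis using zero_y2[OF ob M1_zero[OF ob]] by simp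
  next
    case False
    show ?thesis
    proof (cases "M2 ob = 0")
      case True
      have "zero_at G T y2 ob"
        by (rule zero_at_I[OF fins(4,2) ob]) (use y2_nonneg True in \<open>auto simp: M2_def\<close>)
      then show ?thesis by simp
    next
      case M2: False
      let ?r = "M2 ob / M1 ob"
      have r0: "?r \<noteq> 0" using M2 False by simp
      have sx: "(\<Sum>c\<in>A. xo2 ob c) = (\<Sum>c\<in>A. xo ob c) * ?r" for A
      proof -
        have "(\<Sum>c\<in>A. xo2 ob c) = (\<Sum>c\<in>A. xo ob c * ?r)" unfolding xo2_def using False by simp
        also have "\<dots> = (\<Sum>c\<in>A. xo ob c) * ?r" by (rule sum_distrib_right[symmetric])
        finally show ?thesis .
      qed
      have "(\<Sum>c\<in>{c \<in> Acomm G. i \<notin> c}. xo2 ob c) / (\<Sum>c'\<in>Acomm G. xo2 ob c') = W1 ob i" for i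
        unfolding sx W1_def using r0 by simp
      moreover have "xo2 ob c / (\<Sum>c'\<in>Acomm G. xo2 ob c') = W2 ob c" for c
        unfolding sx W2_def using r0 False by (simp add: xo2_def M1_def)
      ultimately show ?thesis by simp
    qed
  qed
qed

lemma feas2: "opt_feasible G Tg Av y2 xo2"
  unfolding opt_feasible_def Let_def
proof (intro conjI ballI)
  show "0 \<le> y2 s a" if "s \<in> jS G - T" "a \<in> jA G" for s a using y2_nonneg that .
  show "0 \<le> xo2 ob c" if "ob \<in> jO G" "c \<in> Acomm G" for ob c
    unfolding xo2_def using that xo_nonneg M1_nonneg M2_nonneg by (auto intro!: mult_nonneg_nonneg divide_nonneg_nonneg)
  show "(\<Sum>a\<in>jA G. y2 s a) = (\<Sum>s'\<in>jS G - T. \<Sum>b\<in>jA G. y2 s' b * jP G s' b s) + (if s = sinit G then 1 else 0)"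
    if s: "s \<in> jS G - T" for s
  proof -
    have a: "(\<Sum>a\<in>jA G. y2 s a) = 2 * (\<Sum>a\<in>jA G. xs s a) - (\<Sum>a\<in>jA G. y0 s a)"
      by (simp add: y2_def sum_subtractf sum_distrib_left)
    have b: "(\<Sum>s'\<in>jS G - T. \<Sum>b\<in>jA G. y2 s' b * jP G s' b s) =
       2 * (\<Sum>s'\<in>jS G - T. \<Sum>b\<in>jA G. xs s' b * jP G s' b s) - (\<Sum>s'\<in>jS G - T. \<Sum>b\<in>jA G. y0 s' b * jP G s' b s)"
      by (simp add: y2_def sum_subtractf sum_distrib_left left_diff_distrib mult.assoc)
    show ?thesis using a b xs_flow[OF s] occ_flow[OF wf ap fo s] by linarith
  qed
  have "(\<Sum>s\<in>jS G - T. \<Sum>a\<in>jA G. \<Sum>s'\<in>Tg. y2 s a * jP G s a s') =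
      2 * (\<Sum>s\<in>jS G - T. \<Sum>a\<in>jA G. \<Sum>s'\<in>Tg. xs s a * jP G s a s') -
      (\<Sum>s\<in>jS G - T. \<Sum>a\<in>jA G. \<Sum>s'\<in>Tg. y0 s a * jP G s a s')"
    unfolding y2_def by (simp add: sum_subtractf left_diff_distrib sum_distrib_left mult.assoc)
  then show "vstar G Tg Av \<le> (\<Sum>s\<in>jS G - T. \<Sum>a\<in>jA G. \<Sum>s'\<in>Tg. y2 s a * jP G s a s')"
    using circ_Tg xs_reach by linarith
  show "(\<Sum>l\<in>{l\<in>jL G. (ob, l) \<notin> T}. \<Sum>a\<in>jA G. y2 (ob, l) a) = (\<Sum>c\<in>Acomm G. xo2 ob c)"
    if ob: "ob \<in> jO G" for ob
  proof (cases "M1 ob = 0")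
    case True
    have "zero_at G T y2 ob" using zero_y2[OF ob M1_zero[OF ob True]] .
    then have "(\<Sum>l\<in>{l\<in>jL G. (ob, l) \<notin> T}. \<Sum>a\<in>jA G. y2 (ob, l) a) = 0"
      unfolding zero_at_def by (intro sum.neutral) auto
    then show ?thesis using True by (simp add: xo2_def)
  next
    case False
    have "(\<Sum>c\<in>Acomm G. xo2 ob c) = (\<Sum>c\<in>Acomm G. xo ob c * (M2 ob / M1 ob))"
      unfolding xo2_def using False by simp
    also have "\<dots> = M1 ob * (M2 ob / M1 ob)" unfolding M1_def by (rule sum_distrib_right[symmetric])
    also have "\<dots> = M2 ob" using False by simp
    finally show ?thesis unfolding M2_def by simp
  qed
qed

lemma f_mid: "PhiV G T y0 W1 W2 + PhiV G T y2 W1 W2 \<le> 2 * PhiV G T xs W1 W2"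
proof (rule PhiV_mid)
  show "y0 s a + y2 s a = 2 * xs s a" for s a by (simp add: y2_def)
  show "0 \<le> y0 s a" if "s \<in> jS G - T" "a \<in> jA G" for s a using occ_nonneg that .
  show "0 \<le> y2 s a" if "s \<in> jS G - T" "a \<in> jA G" for s a using y2_nonneg that .
  show "0 \<le> W1 ob i" if "ob \<in> jO G" "i \<in> agents G" for ob i using W_nonneg1 that .
  show "0 \<le> W2 ob c" if "ob \<in> jO G" "c \<in> Acomm G" for ob c using W_nonneg2 that .
  show "finite (PiE {i} (Act G))" if "i \<in> agents G" for i using fin_PiE that by simp
  show "finite (PiE c (Act G))" if "c \<in> Acomm G" for c using fin_PiE that by (simp add: Acomm_def)
  show "hterm G T y0 + hterm G T y2 = 2 * hterm G T xs"
  proof (rule hterm_mid[where ca=D and cb=X and cc="\<lambda>s. 2 * X s - D s" and p=pa])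
    show "y0 s a = D s * pa s a \<and> xs s a = X s * pa s a \<and> y2 s a = (2 * X s - D s) * pa s a"
      if "s \<in> jS G - T" "a \<in> jA G" for s a
      using occ_eq[OF that(1)] xs_eq[OF that] by (simp add: y2_def algebra_simps)
    show "(\<Sum>a\<in>jA G. pa s a) = 1" if "s \<in> jS G - T" for s using pa_sum that by simp
    show "D s + (2 * X s - D s) = 2 * X s" for s by simp
  qed
qed

lemma part2a: "Dbar G T pc pa \<le> opt_objective G T xs xo"
proof -
  have "opt_objective G T xs xo \<le> opt_objective G T y2 xo2"
    using opt feas2 by (simp add: opt_optimal_def)
  then show ?thesis using f_mid unfolding f0 f1 f2 by linarith
qed

lemma part2b:
  assumes cp': "comm_policy G pc'" and ap': "act_policy G pa'"
    and rp: "reach_prob G Tg Av pa' = vstar G Tg Av" and fo': "finite_occ G T pa'"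
  shows "opt_objective G T xs xo \<le> Dbar G T pc' pa'"
proof -
  let ?y = "occ G T pa'"
  define M where "M ob = (\<Sum>l\<in>{l\<in>jL G. (ob, l) \<notin> T}. \<Sum>a\<in>jA G. ?y (ob, l) a)" for ob
  define xo' where "xo' ob c = pc' ob c * M ob" for ob c
  have yn: "0 \<le> ?y s a" if "s \<in> jS G - T" "a \<in> jA G" for s a
    unfolding occ_def using fo' that ap'
    by (intro suminf_nonneg) (auto simp: finite_occ_def act_policy_def intro!: mult_nonneg_nonneg stdist_nonneg[OF wf ap'])
  have Mn: "0 \<le> M ob" if "ob \<in> jO G" for ob
    unfolding M_def using that by (intro sum_nonneg yn) (auto simp: jS_def)
  have pcs: "(\<Sum>c\<in>Acomm G. pc' ob c) = 1" "\<And>c. c \<in> Acomm G \<Longrightarrow> 0 \<le> pc' ob c" if "ob \<in> jO G" for ob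
    using cp' that by (auto simp: comm_policy_def)
  have sx: "(\<Sum>c\<in>A. xo' ob c) = (\<Sum>c\<in>A. pc' ob c) * M ob" for ob A
    unfolding xo'_def by (rule sum_distrib_right[symmetric])
  have feas': "opt_feasible G Tg Av ?y xo'"
    unfolding opt_feasible_def Let_def
  proof (intro conjI ballI)
    show "0 \<le> ?y s a" if "s \<in> jS G - T" "a \<in> jA G" for s a using yn that .
    show "0 \<le> xo' ob c" if "ob \<in> jO G" "c \<in> Acomm G" for ob c
      unfolding xo'_def using that pcs Mn by auto
    show "(\<Sum>a\<in>jA G. ?y s a) = (\<Sum>s'\<in>jS G - T. \<Sum>b\<in>jA G. ?y s' b * jP G s' b s) + (if s = sinit G then 1 else 0)"
      if "s \<in> jS G - T" for s using occ_flow[OF wf ap' fo' that] .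
    show "vstar G Tg Av \<le> (\<Sum>s\<in>jS G - T. \<Sum>a\<in>jA G. \<Sum>s'\<in>Tg. ?y s a * jP G s a s')"
      using reach_prob_occ[OF wf ra ap' fo'] rp sinit_notin_Tg by simp
    show "(\<Sum>l\<in>{l\<in>jL G. (ob, l) \<notin> T}. \<Sum>a\<in>jA G. ?y (ob, l) a) = (\<Sum>c\<in>Acomm G. xo' ob c)"
      if "ob \<in> jO G" for ob using pcs[OF that] by (simp add: sx M_def)
  qed
  have "opt_objective G T xs xo \<le> opt_objective G T ?y xo'"
    using opt feas' by (simp add: opt_optimal_def)
  also have "opt_objective G T ?y xo' = Dbar G T pc' pa'"
    unfolding opt_objective_def Dbar_def
  proof (rule PhiV_cong)
    fix ob assume ob: "ob \<in> jO G"
    show "zero_at G T ?y ob \<or> ((\<forall>i\<in>agents G. (\<Sum>c\<in>{c \<in> Acomm G. i \<notin> c}. xo' ob c) / (\<Sum>c'\<in>Acomm G. xo' ob c') =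
          (\<Sum>c\<in>{c \<in> Acomm G. i \<notin> c}. pc' ob c)) \<and>
        (\<forall>c\<in>Acomm G. xo' ob c / (\<Sum>c'\<in>Acomm G. xo' ob c') = pc' ob c))"
    proof (cases "M ob = 0")
      case True
      have "zero_at G T ?y ob"
        by (rule zero_at_I[OF fins(4,2) ob]) (use yn True in \<open>auto simp: M_def\<close>)
      then show ?thesis by simp
    next
      case False
      then show ?thesis unfolding sx using pcs[OF ob] by (simp add: xo'_def)
    qed
  qed
  finally show ?thesis .
qed

end

theorem theorem2:
  fixes G :: "('o, 'l, 'a) game"
    and Tg Av :: "((nat \<Rightarrow> 'o) \<times> (nat \<Rightarrow> 'l)) set"
    and xs :: "(nat \<Rightarrow> 'o) \<times> (nat \<Rightarrow> 'l) \<Rightarrow> (nat \<Rightarrow> 'a) \<Rightarrow> real"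
    and xo :: "(nat \<Rightarrow> 'o) \<Rightarrow> nat set \<Rightarrow> real"
    and pc :: "(nat \<Rightarrow> 'o) \<Rightarrow> nat set \<Rightarrow> real"
    and pa :: "(nat \<Rightarrow> 'o) \<times> (nat \<Rightarrow> 'l) \<Rightarrow> (nat \<Rightarrow> 'a) \<Rightarrow> real"
  assumes "well_formed_game G"
    and "reach_avoid_obj G Tg Av"
    and "opt_optimal G Tg Av xs xo"
    and "comm_policy G pc"
    and "act_policy G pa"
    and "\<forall>ob\<in>jO G. (\<Sum>d\<in>Acomm G. xo ob d) \<noteq> 0 \<longrightarrow>
           (\<forall>c\<in>Acomm G. pc ob c = xo ob c / (\<Sum>d\<in>Acomm G. xo ob d))"
    and "\<forall>s\<in>jS G - (Tg \<union> Av). (\<Sum>b\<in>jA G. xs s b) \<noteq> 0 \<longrightarrow>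
           (\<forall>a\<in>jA G. pa s a = xs s a / (\<Sum>b\<in>jA G. xs s b))"
  shows "reach_prob G Tg Av pa = vstar G Tg Av \<and>
         (\<forall>pc' pa'. comm_policy G pc' \<and> act_policy G pa' \<and>
            reach_prob G Tg Av pa' = vstar G Tg Av \<and> finite_occ G (Tg \<union> Av) pa' \<longrightarrow>
            Dbar G (Tg \<union> Av) pc pa \<le> Dbar G (Tg \<union> Av) pc' pa')"
proof -
  interpret setting G Tg Av xs xo pc pa using assms by unfold_locales
  show ?thesis
  proof (intro conjI allI impI)
    show "reach_prob G Tg Av pa = vstar G Tg Av" by (rule part1)
    fix pc' pa'
    assume h: "comm_policy G pc' \<and> act_policy G pa' \<and> reach_prob G Tg Av pa' = vstar G Tg Av \<and> finite_occ G (Tg \<union> Av) pa'"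
    show "Dbar G (Tg \<union> Av) pc pa \<le> Dbar G (Tg \<union> Av) pc' pa'"
      using part2a part2b[of pc' pa'] h by linarith
  qed
qed

end
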